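(* Let $\Omega\subset\mathbb{R}^n$ be a bounded open set with $C^2$ boundary, and let $\rho_0>0$ be such that the oriented boundary distance $b_\Omega$ is of class $C^2$ with bounded first and second derivatives on $\partial\Omega+B_{\rho_0}=\{y\in B(x,\rho_0): x\in\partial\Omega\}$. Let $\gamma\in AC(0,T;\mathbb{R}^n)$ and suppose that $d_\Omega(\gamma(t))<\rho_0$ for all $t\in[0,T]$. Then $d_\Omega\circ\gamma\in AC(0,T)$ and $$\frac{d}{dt}(d_\Omega\circ\gamma)(t)=\langle Db_\Omega(\gamma(t)),\dot\gamma(t)\rangle\,\mathbf{1}_{\Omega^c}(\gamma(t))\quad\text{for a.e. } t\in[0,T].$$ Moreover, the set $$N_\gamma:=\{t\in[0,T]:\ \gamma(t)\in\partial\Omega,\ \dot\gamma(t)\text{ exists},\ \langle Db_\Omega(\gamma(t)),\dot\gamma(t)\rangle\neq 0\}$$ is a discrete set.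
   Context: $AC(0,T;\mathbb{R}^n)$ is the space of absolutely continuous functions $[0,T]\to\mathbb{R}^n$. $d_\Omega(x)=\inf_{y\in\overline\Omega}|x-y|$ is the distance from $\overline\Omega$, $d_{\Omega^c}$ the distance from $\mathbb{R}^n\setminus\Omega$, and $b_\Omega=d_\Omega-d_{\Omega^c}$ is the oriented boundary distance. $\mathbf{1}_{\Omega^c}$ is the characteristic function of $\Omega^c=\mathbb{R}^n\setminus\Omega$. *)

theory Defs
  imports "HOL-Analysis.Analysis"
begin

text \<open>Distance from the closure of a set (infdist to a set equals infdist to its closure),
  and the oriented boundary distance.\<close>
definition dist_set :: "'a::euclidean_space set \<Rightarrow> 'a \<Rightarrow> real" where
  "dist_set \<Omega> x = infdist x \<Omega>"

definition oriented_dist :: "'a::euclidean_space set \<Rightarrow> 'a \<Rightarrow> real" where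
  "oriented_dist \<Omega> x = infdist x \<Omega> - infdist x (- \<Omega>)"

definition absolutely_continuous_on :: "real set \<Rightarrow> (real \<Rightarrow> 'a::real_normed_vector) \<Rightarrow> bool" where
  "absolutely_continuous_on S f \<longleftrightarrow>
     (\<forall>e>0. \<exists>d>0. \<forall>(n::nat) (a::nat \<Rightarrow> real) (b::nat \<Rightarrow> real).
        (\<forall>i<n. a i \<le> b i \<and> {a i..b i} \<subseteq> S) \<and>
        (\<forall>i<n. \<forall>j<n. i \<noteq> j \<longrightarrow> b i \<le> a j \<or> b j \<le> a i) \<and>
        (\<Sum>i<n. b i - a i) < d
        \<longrightarrow> (\<Sum>i<n. norm (f (b i) - f (a i))) < e)"

definition C2_on_with :: "'a::euclidean_space set \<Rightarrow> ('a \<Rightarrow> real) \<Rightarrow> ('a \<Rightarrow> 'a) \<Rightarrow> ('a \<Rightarrow> 'a \<Rightarrow>\<^sub>L 'a) \<Rightarrow> bool" where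
  "C2_on_with S f Df D2f \<longleftrightarrow>
     (\<forall>x\<in>S. (f has_derivative (\<lambda>h. Df x \<bullet> h)) (at x)) \<and>
     (\<forall>x\<in>S. (Df has_derivative blinfun_apply (D2f x)) (at x)) \<and>
     continuous_on S D2f"

definition C2_boundary :: "'a::euclidean_space set \<Rightarrow> bool" where
  "C2_boundary \<Omega> \<longleftrightarrow>
     (\<forall>x\<in>frontier \<Omega>. \<exists>r>0. \<exists>\<phi> D\<phi> D2\<phi>.
        C2_on_with (ball x r) \<phi> D\<phi> D2\<phi> \<and>
        (\<forall>y\<in>ball x r. D\<phi> y \<noteq> 0) \<and>
        \<Omega> \<inter> ball x r = {y \<in> ball x r. \<phi> y < 0})"

end

theory Submission
  imports Defs "HOL-Analysis.Analysis"
begin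

lemma negl_countable: "countable (A::'a::euclidean_space set) \<Longrightarrow> negligible A"
proof -
  assume "countable A"
  then have "negligible (\<Union>((\<lambda>x. {x}) ` A))"
    by (intro negligible_countable_Union) auto
  then show ?thesis by simp
qed

definition dq :: "(real \<Rightarrow> real) \<Rightarrow> real \<Rightarrow> real \<Rightarrow> real" where
  "dq F u v = (F v - F u) / (v - u)"

definition freq_lt :: "(real \<Rightarrow> real) \<Rightarrow> real \<Rightarrow> real \<Rightarrow> bool" where
  "freq_lt F x p \<longleftrightarrow> (\<forall>d>0. \<exists>u v. u \<le> x \<and> x \<le> v \<and> u < v \<and> v - u < d \<and> dq F u v < p)"

definition freq_gt :: "(real \<Rightarrow> real) \<Rightarrow> real \<Rightarrow> real \<Rightarrow> bool" where
  "freq_gt F x p \<longleftrightarrow> (\<forall>d>0. \<exists>u v. u \<le> x \<and> x \<le> v \<and> u < v \<and> v - u < d \<and> dq F u v > p)"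

lemma cball_real_mid: "cball ((u+v)/2) ((v-u)/2) = {u..v::real}"
  by (simp add: cball_eq_atLeastAtMost field_simps)

lemma vitali_intervals:
  fixes S :: "real set"
  assumes cov: "\<And>x d. x \<in> S \<Longrightarrow> d > 0 \<Longrightarrow> \<exists>u v. u \<le> x \<and> x \<le> v \<and> u < v \<and> v - u < d \<and> P u v"
  obtains C where "countable C" "\<And>i. i \<in> C \<Longrightarrow> fst i < snd i \<and> P (fst i) (snd i)"
    "disjoint_family_on (\<lambda>i. {fst i..snd i}) C"
    "negligible (S - (\<Union>i\<in>C. {fst i<..<snd i}))"
proof -
  let ?K = "{i. fst i < snd i \<and> P (fst i) (snd i)}"
  let ?a = "\<lambda>i::real\<times>real. (fst i + snd i)/2"
  let ?r = "\<lambda>i::real\<times>real. (snd i - fst i)/2"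
  have cb: "cball (?a i) (?r i) = {fst i..snd i}" for i using cball_real_mid by blast
  have r: "\<And>i. i \<in> ?K \<Longrightarrow> 0 < ?r i" by auto
  have S: "\<exists>i. i \<in> ?K \<and> x \<in> cball (?a i) (?r i) \<and> ?r i < d" if xS: "x \<in> S" "0 < d" for x d
  proof -
    obtain u v where "u \<le> x \<and> x \<le> v \<and> u < v \<and> v - u < d \<and> P u v" using cov[OF xS] by blast
    moreover have "x \<in> cball (?a (u,v)) (?r (u,v))" using cb[of "(u,v)"] calculation by auto
    ultimately show ?thesis by (intro exI[of _ "(u,v)"]) auto
  qed
  obtain C where C: "countable C" "C \<subseteq> ?K"
     "pairwise (\<lambda>i j. disjnt (cball (?a i) (?r i)) (cball (?a j) (?r j))) C"
     "negligible(S - (\<Union>i \<in> C. cball (?a i) (?r i)))"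
    by (rule Vitali_covering_theorem_cballs[of ?K ?r S ?a, OF r S]) blast+
  show thesis
  proof (rule that[OF C(1)])
    show "\<And>i. i \<in> C \<Longrightarrow> fst i < snd i \<and> P (fst i) (snd i)" using C(2) by auto
    show "disjoint_family_on (\<lambda>i. {fst i..snd i}) C"
      using C(3) unfolding cb by (auto simp: pairwise_def disjoint_family_on_def disjnt_def)
    have "negligible ((fst ` C) \<union> (snd ` C))" using C(1) by (intro negl_countable) auto
    then have "negligible ((S - (\<Union>i \<in> C. {fst i..snd i})) \<union> ((fst ` C) \<union> (snd ` C)))"
      using C(4) unfolding cb by (rule negligible_Un[rotated])
    then show "negligible (S - (\<Union>i\<in>C. {fst i<..<snd i}))"
      by (rule negligible_subset) force
  qed
qed

lemma fam_upper:
  fixes F :: "real \<Rightarrow> real"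
  assumes mono: "\<And>x y. x \<le> y \<Longrightarrow> F x \<le> F y" and cont: "continuous_on UNIV F"
    and C: "countable C" "disjoint_family_on (\<lambda>i. {fst i..snd i}) C"
    and le: "\<And>i. i\<in>C \<Longrightarrow> fst i \<le> snd i \<and> F (snd i) - F (fst i) \<le> p * (snd i - fst i)"
    and p: "p \<ge> 0"
  shows "emeasure (interval_measure F) (\<Union>i\<in>C. {fst i..snd i})
          \<le> ennreal p * emeasure lebesgue (\<Union>i\<in>C. {fst i..snd i})"
proof -
  have "emeasure (interval_measure F) (\<Union>i\<in>C. {fst i..snd i})
      = (\<integral>\<^sup>+i. emeasure (interval_measure F) {fst i..snd i} \<partial>count_space C)"
    by (rule emeasure_UN_countable) (use C in auto)
  also have "\<dots> = (\<integral>\<^sup>+i. ennreal (F (snd i) - F (fst i)) \<partial>count_space C)"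
    by (rule nn_integral_cong) (use le in \<open>auto intro!: emeasure_interval_measure_Icc mono cont\<close>)
  also have "\<dots> \<le> (\<integral>\<^sup>+i. ennreal p * emeasure lebesgue {fst i..snd i} \<partial>count_space C)"
    by (rule nn_integral_mono) (use le p in \<open>auto simp: ennreal_mult[symmetric] intro!: ennreal_leI\<close>)
  also have "\<dots> = ennreal p * (\<integral>\<^sup>+i. emeasure lebesgue {fst i..snd i} \<partial>count_space C)"
    by (rule nn_integral_cmult) simp
  also have "\<dots> = ennreal p * emeasure lebesgue (\<Union>i\<in>C. {fst i..snd i})"
    by (subst emeasure_UN_countable) (use C in auto)
  finally show ?thesis .
qed

lemma fam_lower:
  fixes F :: "real \<Rightarrow> real"
  assumes mono: "\<And>x y. x \<le> y \<Longrightarrow> F x \<le> F y" and cont: "continuous_on UNIV F"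
    and C: "countable C" "disjoint_family_on (\<lambda>i. {fst i..snd i}) C"
    and le: "\<And>i. i\<in>C \<Longrightarrow> fst i \<le> snd i \<and> q * (snd i - fst i) \<le> F (snd i) - F (fst i)"
    and q: "q \<ge> 0"
  shows "ennreal q * emeasure lebesgue (\<Union>i\<in>C. {fst i..snd i})
          \<le> emeasure (interval_measure F) (\<Union>i\<in>C. {fst i..snd i})"
proof -
  have "ennreal q * emeasure lebesgue (\<Union>i\<in>C. {fst i..snd i})
      = ennreal q * (\<integral>\<^sup>+i. emeasure lebesgue {fst i..snd i} \<partial>count_space C)"
    by (subst emeasure_UN_countable) (use C in auto)
  also have "\<dots> = (\<integral>\<^sup>+i. ennreal q * emeasure lebesgue {fst i..snd i} \<partial>count_space C)"
    by (rule nn_integral_cmult[symmetric]) simp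
  also have "\<dots> \<le> (\<integral>\<^sup>+i. ennreal (F (snd i) - F (fst i)) \<partial>count_space C)"
    by (rule nn_integral_mono) (use le q in \<open>auto simp: ennreal_mult[symmetric] intro!: ennreal_leI\<close>)
  also have "\<dots> = (\<integral>\<^sup>+i. emeasure (interval_measure F) {fst i..snd i} \<partial>count_space C)"
    by (rule nn_integral_cong) (use le in \<open>auto intro!: emeasure_interval_measure_Icc[symmetric] mono cont\<close>)
  also have "\<dots> = emeasure (interval_measure F) (\<Union>i\<in>C. {fst i..snd i})"
    by (rule emeasure_UN_countable[symmetric]) (use C in auto)
  finally show ?thesis .
qed

lemma null_by_step:
  fixes E :: "real set"
  assumes step: "\<And>G N. open G \<Longrightarrow> bounded G \<Longrightarrow> negligible N \<Longrightarrow> E \<subseteq> G \<union> N \<Longrightarrow>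
      \<exists>H N'. open H \<and> bounded H \<and> negligible N' \<and> E \<subseteq> H \<union> N' \<and> measure lebesgue H \<le> r * measure lebesgue G"
    and r: "0 \<le> r" "r < 1" and bE: "bounded E"
  shows "negligible E"
proof -
  obtain R where R: "E \<subseteq> ball 0 R" using bE bounded_subset_ballD by blast
  let ?m0 = "measure lebesgue (ball (0::real) R)"
  have it: "\<exists>G N. open G \<and> bounded G \<and> negligible N \<and> E \<subseteq> G \<union> N \<and> measure lebesgue G \<le> r^k * ?m0" for k
  proof (induction k)
    case 0
    show ?case by (rule exI[of _ "ball 0 R"], rule exI[of _ "{}"]) (use R in auto)
  next
    case (Suc k)
    then obtain G N where GN: "open G" "bounded G" "negligible N" "E \<subseteq> G \<union> N" "measure lebesgue G \<le> r^k * ?m0"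
      by blast
    obtain H N' where HN: "open H" "bounded H" "negligible N'" "E \<subseteq> H \<union> N'" "measure lebesgue H \<le> r * measure lebesgue G"
      using step[OF GN(1-4)] by blast
    have "measure lebesgue H \<le> r^(Suc k) * ?m0"
      using HN(5) mult_left_mono[OF GN(5) r(1)] by simp
    then show ?case using HN by blast
  qed
  show ?thesis
    unfolding negligible_outer
  proof (intro allI impI)
    fix e :: real assume e: "e > 0"
    have "e / (?m0 + 1) > 0" using e by (simp add: add_nonneg_pos)
    then obtain k where k: "r^k < e / (?m0 + 1)" using real_arch_pow_inv r(2) by blast
    obtain G N where GN: "open G" "bounded G" "negligible N" "E \<subseteq> G \<union> N" "measure lebesgue G \<le> r^k * ?m0"
      using it by blast
    have Gm: "G \<in> lmeasurable" using GN lmeasurable_open by blast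
    have "r^k * ?m0 \<le> e / (?m0 + 1) * ?m0"
      using k by (intro mult_right_mono) auto
    also have "\<dots> < e"
    proof -
      have m0: "?m0 \<ge> 0" by simp
      have "e / (?m0 + 1) * ?m0 = e * (?m0 / (?m0 + 1))" by simp
      have p1: "0 < ?m0 + 1" using m0 by linarith
      have "?m0 / (?m0 + 1) < 1" using divide_less_eq_1_pos[OF p1, of ?m0] by linarith
      then have "e * (?m0 / (?m0 + 1)) < e * 1" using e by (intro mult_strict_left_mono) auto
      also have "e * 1 = e" by simp
      finally show ?thesis by simp
    qed
    finally have "measure lebesgue G < e" using GN(5) by linarith
    moreover have "measure lebesgue (G \<union> N) = measure lebesgue G"
      using GN(3) Gm by (simp add: measure_Un_null_set negligible_iff_null_sets fmeasurableD)
    moreover have "G \<union> N \<in> lmeasurable"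
      using Gm GN(3) by (auto simp: negligible_iff_measure intro: fmeasurable.Un)
    ultimately show "\<exists>T. E \<subseteq> T \<and> T \<in> lmeasurable \<and> measure lebesgue T < e"
      using GN(4) by (intro exI[of _ "G \<union> N"]) auto
  qed
qed

lemma dq_nonneg:
  assumes mono: "\<And>x y. x \<le> y \<Longrightarrow> F x \<le> F y" and "u < v"
  shows "dq F u v \<ge> 0"
  using mono[of u v] assms(2) by (simp add: dq_def)

lemma Icc_sub_ball: "u \<le> x \<Longrightarrow> x \<le> v \<Longrightarrow> v - u < r \<Longrightarrow> {u..v} \<subseteq> ball (x::real) r"
  by (auto simp: dist_real_def)

lemma countable_UN_Icc_sets: "countable C \<Longrightarrow> (\<Union>i\<in>C. {fst i..snd i::real}) \<in> sets borel"
  by (rule sets.countable_UN'') auto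

lemma step_pq:
  fixes F :: "real \<Rightarrow> real"
  assumes mono: "\<And>x y. x \<le> y \<Longrightarrow> F x \<le> F y" and cont: "continuous_on UNIV F"
    and pq: "0 \<le> p" "p < q"
    and E: "E \<subseteq> {x. freq_lt F x p \<and> freq_gt F x q}"
    and G: "open G" "bounded G" and N: "negligible N" "E \<subseteq> G \<union> N"
  shows "\<exists>H N'. open H \<and> bounded H \<and> negligible N' \<and> E \<subseteq> H \<union> N' \<and>
           measure lebesgue H \<le> (p / q) * measure lebesgue G"
proof -
  let ?\<mu> = "interval_measure F"
  define S1 where "S1 = E - N"
  have S1G: "S1 \<subseteq> G" using N S1_def by auto
  have cov1: "\<exists>u v. u \<le> x \<and> x \<le> v \<and> u < v \<and> v - u < d \<and> ({u..v} \<subseteq> G \<and> F v - F u \<le> p * (v - u))"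
    if x: "x \<in> S1" "d > 0" for x d
  proof -
    obtain \<rho> where \<rho>: "\<rho> > 0" "ball x \<rho> \<subseteq> G" using G(1) x S1G open_contains_ball by blast
    have "freq_lt F x p" using x E S1_def by auto
    then obtain u v where uv: "u \<le> x" "x \<le> v" "u < v" "v - u < min d \<rho>" "dq F u v < p"
      unfolding freq_lt_def using x(2) \<rho>(1) by (metis min_less_iff_conj)
    have "{u..v} \<subseteq> G" using Icc_sub_ball[of u x v \<rho>] uv \<rho> by auto
    moreover have "F v - F u \<le> p * (v - u)" using uv(3,5) by (simp add: dq_def divide_less_eq)
    ultimately show ?thesis using uv by auto
  qed
  obtain C1 where C1: "countable C1" "\<And>i. i \<in> C1 \<Longrightarrow> fst i < snd i \<and> {fst i..snd i} \<subseteq> G \<and> F (snd i) - F (fst i) \<le> p * (snd i - fst i)"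
    "disjoint_family_on (\<lambda>i. {fst i..snd i}) C1" "negligible (S1 - (\<Union>i\<in>C1. {fst i<..<snd i}))"
    by (rule vitali_intervals[of S1 "\<lambda>u v. {u..v} \<subseteq> G \<and> F v - F u \<le> p * (v - u)", OF cov1]) blast+
  define O1 where "O1 = (\<Union>i\<in>C1. {fst i<..<snd i})"
  define A where "A = (\<Union>i\<in>C1. {fst i..snd i})"
  define S2 where "S2 = S1 \<inter> O1"
  have cov2: "\<exists>u v. u \<le> x \<and> x \<le> v \<and> u < v \<and> v - u < d \<and> ((\<exists>i\<in>C1. {u..v} \<subseteq> {fst i<..<snd i}) \<and> q * (v - u) \<le> F v - F u)"
    if x: "x \<in> S2" "d > 0" for x d
  proof -
    obtain i where i: "i \<in> C1" "x \<in> {fst i<..<snd i}" using x S2_def O1_def by auto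
    obtain \<rho> where \<rho>: "\<rho> > 0" "ball x \<rho> \<subseteq> {fst i<..<snd i}" using i(2) open_contains_ball
      by (metis open_greaterThanLessThan)
    have "freq_gt F x q" using x E S1_def S2_def by auto
    then obtain u v where uv: "u \<le> x" "x \<le> v" "u < v" "v - u < min d \<rho>" "dq F u v > q"
      unfolding freq_gt_def using x(2) \<rho>(1) by (metis min_less_iff_conj)
    have "{u..v} \<subseteq> {fst i<..<snd i}" using Icc_sub_ball[of u x v \<rho>] uv \<rho> by auto
    moreover have "q * (v - u) \<le> F v - F u" using uv(3,5) by (simp add: dq_def less_divide_eq)
    ultimately show ?thesis using uv i(1) by auto
  qed
  obtain C2 where C2: "countable C2" "\<And>j. j \<in> C2 \<Longrightarrow> fst j < snd j \<and> (\<exists>i\<in>C1. {fst j..snd j} \<subseteq> {fst i<..<snd i}) \<and> q * (snd j - fst j) \<le> F (snd j) - F (fst j)"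
    "disjoint_family_on (\<lambda>i. {fst i..snd i}) C2" "negligible (S2 - (\<Union>i\<in>C2. {fst i<..<snd i}))"
    by (rule vitali_intervals[of S2 "\<lambda>u v. (\<exists>i\<in>C1. {u..v} \<subseteq> {fst i<..<snd i}) \<and> q * (v - u) \<le> F v - F u", OF cov2]) blast+
  define H where "H = (\<Union>i\<in>C2. {fst i<..<snd i})"
  define B where "B = (\<Union>i\<in>C2. {fst i..snd i})"
  have HB: "H \<subseteq> B" unfolding H_def B_def by auto
  have BA: "B \<subseteq> A" unfolding A_def B_def using C2(2) by fastforce
  have AG: "A \<subseteq> G" unfolding A_def using C1(2) by blast
  have oH: "open H" unfolding H_def by auto
  have bH: "bounded H" using HB BA AG G(2) bounded_subset by blast
  have negN': "negligible (N \<union> (S1 - O1) \<union> (S2 - H))"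
    using N(1) C1(4) C2(4) unfolding O1_def H_def by (intro negligible_Un) auto
  have EH: "E \<subseteq> H \<union> (N \<union> (S1 - O1) \<union> (S2 - H))" unfolding S1_def S2_def by auto
  have Asets: "A \<in> sets borel" "B \<in> sets borel" unfolding A_def B_def
    using C1(1) C2(1) by (auto intro: countable_UN_Icc_sets)
  have q0: "q \<ge> 0" using pq by linarith
  have mA: "emeasure ?\<mu> A \<le> ennreal p * emeasure lebesgue A"
    unfolding A_def by (rule fam_upper[OF mono cont C1(1) C1(3)]) (use C1(2) pq in \<open>auto simp: less_imp_le\<close>)
  have mB: "ennreal q * emeasure lebesgue B \<le> emeasure ?\<mu> B"
    unfolding B_def by (rule fam_lower[OF mono cont C2(1) C2(3)]) (use C2(2) q0 in \<open>auto simp: less_imp_le\<close>)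
  have "emeasure ?\<mu> B \<le> emeasure ?\<mu> A" by (rule emeasure_mono[OF BA]) (use Asets in simp)
  have Hle: "emeasure lebesgue H \<le> emeasure lebesgue B"
    by (rule emeasure_mono[OF HB]) (use Asets in auto)
  have Ale: "emeasure lebesgue A \<le> emeasure lebesgue G"
    by (rule emeasure_mono[OF AG]) (use G in auto)
  have "ennreal q * emeasure lebesgue H \<le> ennreal q * emeasure lebesgue B"
    by (rule mult_left_mono[OF Hle]) simp
  also have "\<dots> \<le> emeasure ?\<mu> B" by (rule mB)
  also have "\<dots> \<le> emeasure ?\<mu> A" by fact
  also have "\<dots> \<le> ennreal p * emeasure lebesgue A" by (rule mA)
  also have "\<dots> \<le> ennreal p * emeasure lebesgue G" by (rule mult_left_mono[OF Ale]) simp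
  finally have ineq: "ennreal q * emeasure lebesgue H \<le> ennreal p * emeasure lebesgue G" .
  have Gm: "G \<in> lmeasurable" using G lmeasurable_open by blast
  have Hm: "H \<in> lmeasurable" using oH bH lmeasurable_open by blast
  have "ennreal (q * measure lebesgue H) \<le> ennreal (p * measure lebesgue G)"
    using ineq Gm Hm pq q0 by (simp add: emeasure_eq_measure2 ennreal_mult)
  then have "q * measure lebesgue H \<le> p * measure lebesgue G"
    using pq by (subst (asm) ennreal_le_iff) auto
  then have "measure lebesgue H \<le> (p / q) * measure lebesgue G"
    using pq by (simp add: field_simps)
  then show ?thesis using oH bH negN' EH by blast
qed

lemma null_pq:
  fixes F :: "real \<Rightarrow> real"
  assumes mono: "\<And>x y. x \<le> y \<Longrightarrow> F x \<le> F y" and cont: "continuous_on UNIV F"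
    and pq: "p < q"
  shows "negligible {x. freq_lt F x p \<and> freq_gt F x q}"
proof (cases "p < 0")
  case True
  have "{x. freq_lt F x p \<and> freq_gt F x q} = {}"
  proof -
    have "\<not> freq_lt F x p" for x
    proof
      assume "freq_lt F x p"
      then obtain u v where "u < v" "dq F u v < p" unfolding freq_lt_def by (meson zero_less_one)
      then show False using dq_nonneg[of F u v, OF mono] True by linarith
    qed
    then show ?thesis by auto
  qed
  then show ?thesis by (metis negligible_empty)
next
  case False
  let ?E = "{x. freq_lt F x p \<and> freq_gt F x q}"
  have negn: "negligible (?E \<inter> ball 0 (real n))" for n
  proof (rule null_by_step[where r = "p/q"])
    fix G N assume "open G" "bounded G" "negligible N" "?E \<inter> ball 0 (real n) \<subseteq> G \<union> N"
    then show "\<exists>H N'. open H \<and> bounded H \<and> negligible N' \<and> ?E \<inter> ball 0 (real n) \<subseteq> H \<union> N' \<and>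
           measure lebesgue H \<le> (p / q) * measure lebesgue G"
      using step_pq[OF mono cont _ pq, of "?E \<inter> ball 0 (real n)" G N] False by auto
  qed (use False pq in auto)
  have eq: "?E = \<Union>(range (\<lambda>n. ?E \<inter> ball 0 (real n)))"
    by (auto simp: dist_real_def) (meson reals_Archimedean2)
  show ?thesis
    by (subst eq, rule negligible_countable_Union) (use negn in auto)
qed

lemma null_inf:
  fixes F :: "real \<Rightarrow> real"
  assumes mono: "\<And>x y. x \<le> y \<Longrightarrow> F x \<le> F y" and cont: "continuous_on UNIV F"
  shows "negligible {x. \<forall>M. freq_gt F x M}"
proof -
  let ?E = "{x. \<forall>M. freq_gt F x M}"
  let ?\<mu> = "interval_measure F"
  have negn: "negligible (?E \<inter> ball 0 (real n))" for n
    unfolding negligible_outer_le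
  proof (intro allI impI)
    fix e :: real assume e: "e > 0"
    define R where "R = real n + 1"
    define K where "K = F R - F (-R)"
    have K0: "K \<ge> 0" unfolding K_def R_def by (intro diff_ge_0_iff_ge[THEN iffD2] mono) simp
    define M where "M = (K + 1) / e"
    have M0: "M > 0" unfolding M_def using K0 e by simp
    define S where "S = ?E \<inter> ball 0 (real n)"
    have cov: "\<exists>u v. u \<le> x \<and> x \<le> v \<and> u < v \<and> v - u < d \<and> ({u..v} \<subseteq> {-R..R} \<and> M * (v - u) \<le> F v - F u)"
      if x: "x \<in> S" "d > 0" for x d
    proof -
      have "freq_gt F x M" using x S_def by auto
      then obtain u v where uv: "u \<le> x" "x \<le> v" "u < v" "v - u < min d 1" "dq F u v > M"
        unfolding freq_gt_def using x(2) by (metis min_less_iff_conj zero_less_one)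
      have "{u..v} \<subseteq> {-R..R}" using uv x unfolding S_def R_def by (auto simp: dist_real_def)
      moreover have "M * (v - u) \<le> F v - F u" using uv(3,5) by (simp add: dq_def less_divide_eq)
      ultimately show ?thesis using uv by auto
    qed
    obtain C where C: "countable C" "\<And>i. i \<in> C \<Longrightarrow> fst i < snd i \<and> {fst i..snd i} \<subseteq> {-R..R} \<and> M * (snd i - fst i) \<le> F (snd i) - F (fst i)"
      "disjoint_family_on (\<lambda>i. {fst i..snd i}) C" "negligible (S - (\<Union>i\<in>C. {fst i<..<snd i}))"
      by (rule vitali_intervals[of S "\<lambda>u v. {u..v} \<subseteq> {-R..R} \<and> M * (v - u) \<le> F v - F u", OF cov]) blast+
    define B where "B = (\<Union>i\<in>C. {fst i..snd i})"
    have Bs: "B \<in> sets borel" unfolding B_def using C(1) by (rule countable_UN_Icc_sets)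
    have BR: "B \<subseteq> {-R..R}" unfolding B_def using C(2) by blast
    have mB: "ennreal M * emeasure lebesgue B \<le> emeasure ?\<mu> B"
      unfolding B_def by (rule fam_lower[OF mono cont C(1) C(3)]) (use C(2) M0 in \<open>auto simp: less_imp_le\<close>)
    also have "\<dots> \<le> emeasure ?\<mu> {-R..R}" by (rule emeasure_mono[OF BR]) simp
    also have "\<dots> = ennreal K" unfolding K_def
      by (rule emeasure_interval_measure_Icc) (auto simp: R_def intro: mono cont)
    finally have ineq: "ennreal M * emeasure lebesgue B \<le> ennreal K" .
    have Bm: "B \<in> lmeasurable"
      using Bs BR by (intro bounded_set_imp_lmeasurable) (auto intro: bounded_subset[of "{-R..R}"])
    have "ennreal (M * measure lebesgue B) \<le> ennreal K"
      using ineq Bm M0 by (simp add: emeasure_eq_measure2 ennreal_mult)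
    then have MB: "M * measure lebesgue B \<le> K" using K0 by (subst (asm) ennreal_le_iff) auto
    have "measure lebesgue B \<le> K / M" using MB M0 by (simp add: field_simps)
    also have "\<dots> \<le> e" unfolding M_def using e K0 by (simp add: field_simps)
    finally have mBe: "measure lebesgue B \<le> e" .
    define N where "N = S - (\<Union>i\<in>C. {fst i<..<snd i})"
    have "S \<subseteq> B \<union> N" unfolding N_def B_def by auto
    moreover have "B \<union> N \<in> lmeasurable" using Bm C(4) unfolding N_def
      by (auto simp: negligible_iff_measure intro: fmeasurable.Un)
    moreover have "measure lebesgue (B \<union> N) = measure lebesgue B"
      using C(4) Bm unfolding N_def by (simp add: measure_Un_null_set negligible_iff_null_sets fmeasurableD)
    ultimately show "\<exists>T. ?E \<inter> ball 0 (real n) \<subseteq> T \<and> T \<in> lmeasurable \<and> measure lebesgue T \<le> e"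
      using mBe unfolding S_def by (intro exI[of _ "B \<union> N"]) auto
  qed
  have eq: "?E = \<Union>(range (\<lambda>n. ?E \<inter> ball 0 (real n)))"
    by (auto simp: dist_real_def) (meson reals_Archimedean2)
  show ?thesis
    by (subst eq, rule negligible_countable_Union) (use negn in auto)
qed

lemma deriv_from_freq:
  fixes F :: "real \<Rightarrow> real"
  assumes mono: "\<And>x y. x \<le> y \<Longrightarrow> F x \<le> F y"
    and fin: "\<not> (\<forall>M. freq_gt F x M)"
    and pq: "\<forall>p q. p \<in> \<rat> \<longrightarrow> q \<in> \<rat> \<longrightarrow> p < q \<longrightarrow> \<not> (freq_lt F x p \<and> freq_gt F x q)"
  shows "\<exists>L. (F has_real_derivative L) (at x)"
proof -
  define A where "A = {q. \<not> freq_gt F x q}"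
  have Ane: "A \<noteq> {}" using fin A_def by auto
  have neg: "freq_gt F x q" if "q < 0" for q
    unfolding freq_gt_def
  proof (intro allI impI)
    fix d :: real assume d: "d > 0"
    have "dq F x (x + d/2) \<ge> 0" using dq_nonneg[of F x "x + d/2", OF mono] d by simp
    then show "\<exists>u v. u \<le> x \<and> x \<le> v \<and> u < v \<and> v - u < d \<and> q < dq F u v"
      using d that by (intro exI[of _ x] exI[of _ "x + d/2"]) auto
  qed
  have A0: "\<And>q. q \<in> A \<Longrightarrow> 0 \<le> q" using neg unfolding A_def by (metis mem_Collect_eq not_le)
  have bdd: "bdd_below A" using A0 by (meson bdd_belowI)
  define L where "L = Inf A"
  have "((\<lambda>y. (F y - F x) / (y - x)) \<longlongrightarrow> L) (at x)"
  proof (rule LIM_I)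
    fix e :: real assume e: "e > 0"
    obtain q where q: "q \<in> A" "q < L + e"
      using cInf_less_iff[OF Ane bdd, of "L + e"] e unfolding L_def by auto
    then have "\<not> freq_gt F x q" unfolding A_def by auto
    then obtain d1 where d1: "d1 > 0" "\<And>u v. u \<le> x \<Longrightarrow> x \<le> v \<Longrightarrow> u < v \<Longrightarrow> v - u < d1 \<Longrightarrow> dq F u v \<le> q"
      unfolding freq_gt_def by (meson not_le)
    obtain p where p: "p \<in> \<rat>" "L - e < p" "p < L - e/2" using Rats_dense_in_real[of "L - e" "L - e/2"] e by auto
    obtain q' where q': "q' \<in> \<rat>" "L - e/2 < q'" "q' < L" using Rats_dense_in_real[of "L - e/2" L] e by auto
    have "q' \<notin> A"
    proof
      assume "q' \<in> A"
      then have "L \<le> q'" unfolding L_def by (rule cInf_lower[OF _ bdd])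
      then show False using q'(3) by simp
    qed
    then have fq: "freq_gt F x q'" unfolding A_def by auto
    have "p < q'" using p q' by linarith
    then have "\<not> freq_lt F x p" using pq p(1) q'(1) fq by blast
    then obtain d2 where d2: "d2 > 0" "\<And>u v. u \<le> x \<Longrightarrow> x \<le> v \<Longrightarrow> u < v \<Longrightarrow> v - u < d2 \<Longrightarrow> p \<le> dq F u v"
      unfolding freq_lt_def by (meson not_le)
    show "\<exists>s>0. \<forall>y. y \<noteq> x \<and> norm (y - x) < s \<longrightarrow> norm ((F y - F x) / (y - x) - L) < e"
    proof (intro exI[of _ "min d1 d2"] conjI allI impI)
      show "min d1 d2 > 0" using d1 d2 by simp
      fix y assume y: "y \<noteq> x \<and> norm (y - x) < min d1 d2"
      have eqq: "(F y - F x) / (y - x) = dq F (min x y) (max x y)"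
      proof (cases "x \<le> y")
        case True then show ?thesis by (simp add: dq_def)
      next
        case False
        then have "dq F (min x y) (max x y) = (F x - F y) / (x - y)" by (simp add: dq_def)
        also have "\<dots> = (F y - F x) / (y - x)" by (metis minus_diff_eq minus_divide_divide)
        finally show ?thesis by simp
      qed
      have ad: "max x y - min x y = \<bar>y - x\<bar>" by linarith
      have lt: "min x y < max x y" "max x y - min x y < d1" "max x y - min x y < d2"
        using y ad by auto
      have "p \<le> dq F (min x y) (max x y)" "dq F (min x y) (max x y) \<le> q"
        using d1(2)[of "min x y" "max x y"] d2(2)[of "min x y" "max x y"] lt by auto
      then show "norm ((F y - F x) / (y - x) - L) < e" using eqq p q by auto
    qed
  qed
  then show ?thesis using has_field_derivative_iff by blast
qed

lemma mono_diff_ae: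
  fixes F :: "real \<Rightarrow> real"
  assumes mono: "\<And>x y. x \<le> y \<Longrightarrow> F x \<le> F y" and cont: "continuous_on UNIV F"
  shows "negligible {x. \<not> (\<exists>L. (F has_real_derivative L) (at x))}"
proof -
  let ?B = "(\<lambda>(p,q). {x. freq_lt F x p \<and> freq_gt F x q}) ` {(p,q). p \<in> \<rat> \<and> q \<in> \<rat> \<and> p < q}"
  have cnt: "countable {(p,q). p \<in> \<rat> \<and> q \<in> \<rat> \<and> (p::real) < q}"
    by (rule countable_subset[of _ "\<rat> \<times> \<rat>"]) (auto simp: countable_rat)
  have "negligible (\<Union>?B)"
  proof (rule negligible_countable_Union)
    show "countable ?B" by (rule countable_image[OF cnt])
    fix S assume "S \<in> ?B"
    then obtain p q where "p < q" "S = {x. freq_lt F x p \<and> freq_gt F x q}" by (auto simp only: image_iff mem_Collect_eq split: prod.splits)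
    then show "negligible S" using null_pq[OF mono cont, of p q] by simp
  qed
  then have "negligible (\<Union>?B \<union> {x. \<forall>M. freq_gt F x M})"
    using null_inf[OF mono cont] by (rule negligible_Un)
  then show ?thesis
  proof (rule negligible_subset)
    show "{x. \<not> (\<exists>L. (F has_real_derivative L) (at x))} \<subseteq> \<Union>?B \<union> {x. \<forall>M. freq_gt F x M}"
    proof
      fix x assume x: "x \<in> {x. \<not> (\<exists>L. (F has_real_derivative L) (at x))}"
      show "x \<in> \<Union>?B \<union> {x. \<forall>M. freq_gt F x M}"
      proof (rule ccontr)
        assume nx: "x \<notin> \<Union>?B \<union> {x. \<forall>M. freq_gt F x M}"
        have inB: "x \<in> \<Union>?B" if "p\<in>\<rat>" "q\<in>\<rat>" "p<q" "freq_lt F x p \<and> freq_gt F x q" for p q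
        proof -
          have B: "{x. freq_lt F x p \<and> freq_gt F x q} \<in> ?B"
            using that(1-3) by (intro image_eqI[of _ _ "(p,q)"]) simp_all
          have m: "x \<in> {x. freq_lt F x p \<and> freq_gt F x q}" using that(4) by (simp only: mem_Collect_eq)
          show ?thesis using UnionI[OF B m] .
        qed
        have f1: "\<not> (\<forall>M. freq_gt F x M)" using nx by simp
        have f2: "\<forall>p q. p \<in> \<rat> \<longrightarrow> q \<in> \<rat> \<longrightarrow> p < q \<longrightarrow> \<not> (freq_lt F x p \<and> freq_gt F x q)"
        proof (intro allI impI notI)
          fix p q assume h: "p \<in> \<rat>" "q \<in> \<rat>" "p < q" "freq_lt F x p \<and> freq_gt F x q"
          have "x \<in> \<Union>?B" by (rule inB[OF h])
          then have "x \<in> \<Union>?B \<union> {x. \<forall>M. freq_gt F x M}" by (rule UnI1)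
          with nx show False by contradiction
        qed
        have "\<exists>L. (F has_real_derivative L) (at x)"
          using deriv_from_freq[of F x, OF mono f1 f2] .
        then show False using x by blast
      qed
    qed
  qed
qed

definition fam :: "real \<Rightarrow> real \<Rightarrow> nat \<Rightarrow> (nat \<Rightarrow> real) \<Rightarrow> (nat \<Rightarrow> real) \<Rightarrow> bool" where
  "fam a x n \<alpha> \<beta> \<longleftrightarrow> (\<forall>i<n. a \<le> \<alpha> i \<and> \<alpha> i \<le> \<beta> i \<and> \<beta> i \<le> x) \<and>
      (\<forall>i<n. \<forall>j<n. i \<noteq> j \<longrightarrow> \<beta> i \<le> \<alpha> j \<or> \<beta> j \<le> \<alpha> i)"

definition varset :: "(real \<Rightarrow> real) \<Rightarrow> real \<Rightarrow> real \<Rightarrow> real set" where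
  "varset f a x = {(\<Sum>i<n. \<bar>f (\<beta> i) - f (\<alpha> i)\<bar>) | n \<alpha> \<beta>. fam a x n \<alpha> \<beta>}"

definition Var :: "(real \<Rightarrow> real) \<Rightarrow> real \<Rightarrow> real \<Rightarrow> real" where
  "Var f a x = Sup (varset f a x)"

lemma fam_len:
  assumes F: "fam a x n \<alpha> \<beta>" and ax: "a \<le> x"
  shows "(\<Sum>i<n. \<beta> i - \<alpha> i) \<le> x - a"
proof -
  have bnd: "a \<le> \<alpha> i" "\<alpha> i \<le> \<beta> i" "\<beta> i \<le> x" if "i < n" for i
    using F that unfolding fam_def by auto
  have ov: "\<beta> i \<le> \<alpha> j \<or> \<beta> j \<le> \<alpha> i" if "i < n" "j < n" "i \<noteq> j" for i j
    using F that unfolding fam_def by blast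
  have disj: "disjoint_family_on (\<lambda>i. {\<alpha> i<..\<beta> i}) {..<n}"
    unfolding disjoint_family_on_def
  proof (intro ballI impI)
    fix i j assume "i \<in> {..<n}" "j \<in> {..<n}" "i \<noteq> j"
    then have "\<beta> i \<le> \<alpha> j \<or> \<beta> j \<le> \<alpha> i" using ov by blast
    then show "{\<alpha> i<..\<beta> i} \<inter> {\<alpha> j<..\<beta> j} = {}" by auto
  qed
  have "ennreal (\<Sum>i<n. \<beta> i - \<alpha> i) = (\<Sum>i<n. ennreal (\<beta> i - \<alpha> i))"
    using bnd(2) by (subst sum_ennreal) auto
  also have "\<dots> = (\<Sum>i<n. emeasure lborel {\<alpha> i<..\<beta> i})"
    using bnd(2) by (intro sum.cong) auto
  also have "\<dots> = emeasure lborel (\<Union>i<n. {\<alpha> i<..\<beta> i})"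
    by (rule sum_emeasure) (use disj in auto)
  also have "\<dots> \<le> emeasure lborel {a<..x}"
  proof (rule emeasure_mono)
    show "(\<Union>i<n. {\<alpha> i<..\<beta> i}) \<subseteq> {a<..x}"
    proof
      fix t assume "t \<in> (\<Union>i<n. {\<alpha> i<..\<beta> i})"
      then obtain i where "i < n" "\<alpha> i < t" "t \<le> \<beta> i" by auto
      then show "t \<in> {a<..x}" using bnd[of i] by auto
    qed
  qed simp
  also have "\<dots> = ennreal (x - a)" using ax by simp
  finally show ?thesis using ax by (subst (asm) ennreal_le_iff) auto
qed

lemma fam_mono: "fam a x n \<alpha> \<beta> \<Longrightarrow> x \<le> y \<Longrightarrow> fam a y n \<alpha> \<beta>"
  unfolding fam_def by force

lemma varset_mono: "x \<le> y \<Longrightarrow> varset f a x \<subseteq> varset f a y"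
  unfolding varset_def using fam_mono by blast

lemma varset_0: "0 \<in> varset f a x"
  unfolding varset_def fam_def by (rule CollectI, rule exI[of _ 0]) auto

lemma tri_split:
  fixes f :: "real \<Rightarrow> real"
  assumes "u \<le> v"
  shows "\<bar>f v - f u\<bar> \<le> \<bar>f (min v x) - f (min u x)\<bar> + \<bar>f (max v x) - f (max u x)\<bar>"
proof (cases "v \<le> x")
  case True then show ?thesis using assms by (simp add: min_def max_def)
next
  case False
  show ?thesis
  proof (cases "x \<le> u")
    case True then show ?thesis using assms False by (simp add: min_def max_def)
  next
    case False2: False
    then have "min v x = x" "min u x = u" "max v x = v" "max u x = x" using False by auto
    then show ?thesis by simp
  qed
qed

lemma AC_real_D:
  fixes f :: "real \<Rightarrow> real"
  assumes "absolutely_continuous_on S f" "e > 0"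
  obtains d where "d > 0" "\<And>(n::nat) \<alpha> \<beta>. (\<forall>i<n. \<alpha> i \<le> \<beta> i \<and> {\<alpha> i..\<beta> i} \<subseteq> S) \<Longrightarrow>
        (\<forall>i<n. \<forall>j<n. i \<noteq> j \<longrightarrow> \<beta> i \<le> \<alpha> j \<or> \<beta> j \<le> \<alpha> i) \<Longrightarrow>
        (\<Sum>i<n. \<beta> i - \<alpha> i) < d \<Longrightarrow> (\<Sum>i<n. \<bar>f (\<beta> i) - f (\<alpha> i)\<bar>) < e"
proof -
  obtain d where d: "d > 0" and H: "\<forall>(n::nat) \<alpha> \<beta>. (\<forall>i<n. \<alpha> i \<le> \<beta> i \<and> {\<alpha> i..\<beta> i} \<subseteq> S) \<and>
        (\<forall>i<n. \<forall>j<n. i \<noteq> j \<longrightarrow> \<beta> i \<le> \<alpha> j \<or> \<beta> j \<le> \<alpha> i) \<and>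
        (\<Sum>i<n. \<beta> i - \<alpha> i) < d \<longrightarrow> (\<Sum>i<n. \<bar>f (\<beta> i) - f (\<alpha> i)\<bar>) < e"
    using assms unfolding absolutely_continuous_on_def real_norm_def by blast
  show thesis by (rule that[OF d]) (use H in blast)
qed

lemma split_var:
  fixes f :: "real \<Rightarrow> real"
  assumes AC: "absolutely_continuous_on {a..b} f" and e: "e > 0"
  obtains d where "d > 0" "\<And>x y s. a \<le> x \<Longrightarrow> x \<le> y \<Longrightarrow> y \<le> b \<Longrightarrow> y - x < d \<Longrightarrow> s \<in> varset f a y \<Longrightarrow>
      \<exists>s'\<in>varset f a x. s \<le> s' + e"
proof -
  obtain d where d: "d > 0" "\<And>(n::nat) \<alpha> \<beta>. (\<forall>i<n. \<alpha> i \<le> \<beta> i \<and> {\<alpha> i..\<beta> i} \<subseteq> {a..b}) \<Longrightarrow>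
        (\<forall>i<n. \<forall>j<n. i \<noteq> j \<longrightarrow> \<beta> i \<le> \<alpha> j \<or> \<beta> j \<le> \<alpha> i) \<Longrightarrow>
        (\<Sum>i<n. \<beta> i - \<alpha> i) < d \<Longrightarrow> (\<Sum>i<n. \<bar>f (\<beta> i) - f (\<alpha> i)\<bar>) < e"
    using AC_real_D[OF AC e] by blast
  show thesis
  proof (rule that[OF d(1)])
    fix x y s assume xy: "a \<le> x" "x \<le> y" "y \<le> b" "y - x < d" and s: "s \<in> varset f a y"
    then obtain n \<alpha> \<beta> where F: "fam a y n \<alpha> \<beta>" and sdef: "s = (\<Sum>i<n. \<bar>f (\<beta> i) - f (\<alpha> i)\<bar>)"
      unfolding varset_def by (auto simp only: mem_Collect_eq)
    define \<alpha>1 where "\<alpha>1 i = min (\<alpha> i) x" for i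
    define \<beta>1 where "\<beta>1 i = min (\<beta> i) x" for i
    define \<alpha>2 where "\<alpha>2 i = max (\<alpha> i) x" for i
    define \<beta>2 where "\<beta>2 i = max (\<beta> i) x" for i
    have bnd: "a \<le> \<alpha> i" "\<alpha> i \<le> \<beta> i" "\<beta> i \<le> y" if "i < n" for i
      using F that unfolding fam_def by auto
    have ov: "\<beta> i \<le> \<alpha> j \<or> \<beta> j \<le> \<alpha> i" if "i < n" "j < n" "i \<noteq> j" for i j
      using F that unfolding fam_def by blast
    have mm: "\<And>u v. u \<le> v \<Longrightarrow> min u x \<le> min v x" "\<And>u v. u \<le> v \<Longrightarrow> max u x \<le> max v x"
      by auto
    have F1a: "\<forall>i<n. a \<le> \<alpha>1 i \<and> \<alpha>1 i \<le> \<beta>1 i \<and> \<beta>1 i \<le> x"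
    proof (intro allI impI)
      fix i assume i: "i < n"
      show "a \<le> \<alpha>1 i \<and> \<alpha>1 i \<le> \<beta>1 i \<and> \<beta>1 i \<le> x"
        unfolding \<alpha>1_def \<beta>1_def using bnd[OF i] xy(1) by linarith
    qed
    have F1b: "\<forall>i<n. \<forall>j<n. i \<noteq> j \<longrightarrow> \<beta>1 i \<le> \<alpha>1 j \<or> \<beta>1 j \<le> \<alpha>1 i"
    proof (intro allI impI)
      fix i j assume ij: "i < n" "j < n" "i \<noteq> j"
      show "\<beta>1 i \<le> \<alpha>1 j \<or> \<beta>1 j \<le> \<alpha>1 i"
        unfolding \<alpha>1_def \<beta>1_def using ov[OF ij] by linarith
    qed
    have F1: "fam a x n \<alpha>1 \<beta>1" unfolding fam_def using F1a F1b by blast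
    have F2a: "\<forall>i<n. x \<le> \<alpha>2 i \<and> \<alpha>2 i \<le> \<beta>2 i \<and> \<beta>2 i \<le> y"
    proof (intro allI impI)
      fix i assume i: "i < n"
      show "x \<le> \<alpha>2 i \<and> \<alpha>2 i \<le> \<beta>2 i \<and> \<beta>2 i \<le> y"
        unfolding \<alpha>2_def \<beta>2_def using bnd[OF i] xy(2) by linarith
    qed
    have F2b: "\<forall>i<n. \<forall>j<n. i \<noteq> j \<longrightarrow> \<beta>2 i \<le> \<alpha>2 j \<or> \<beta>2 j \<le> \<alpha>2 i"
    proof (intro allI impI)
      fix i j assume ij: "i < n" "j < n" "i \<noteq> j"
      show "\<beta>2 i \<le> \<alpha>2 j \<or> \<beta>2 j \<le> \<alpha>2 i"
        unfolding \<alpha>2_def \<beta>2_def using ov[OF ij] by linarith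
    qed
    have F2: "fam x y n \<alpha>2 \<beta>2" unfolding fam_def using F2a F2b by blast
    have "(\<Sum>i<n. \<beta>2 i - \<alpha>2 i) \<le> y - x" by (rule fam_len[OF F2 xy(2)])
    then have len: "(\<Sum>i<n. \<beta>2 i - \<alpha>2 i) < d" using xy(4) by linarith
    have sub: "\<forall>i<n. \<alpha>2 i \<le> \<beta>2 i \<and> {\<alpha>2 i..\<beta>2 i} \<subseteq> {a..b}"
    proof (intro allI impI conjI)
      fix i assume i: "i < n"
      show "\<alpha>2 i \<le> \<beta>2 i" using F2a i by blast
      have h: "x \<le> \<alpha>2 i" "\<beta>2 i \<le> y" using F2a i by blast+
      show "{\<alpha>2 i..\<beta>2 i} \<subseteq> {a..b}" using h xy(1,3) by auto
    qed
    have small: "(\<Sum>i<n. \<bar>f (\<beta>2 i) - f (\<alpha>2 i)\<bar>) < e"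
      by (rule d(2)[OF sub F2b len])
    have "s \<le> (\<Sum>i<n. \<bar>f (\<beta>1 i) - f (\<alpha>1 i)\<bar> + \<bar>f (\<beta>2 i) - f (\<alpha>2 i)\<bar>)"
      unfolding sdef
    proof (rule sum_mono)
      fix i assume "i \<in> {..<n}"
      then have "\<alpha> i \<le> \<beta> i" using bnd by auto
      then show "\<bar>f (\<beta> i) - f (\<alpha> i)\<bar> \<le> \<bar>f (\<beta>1 i) - f (\<alpha>1 i)\<bar> + \<bar>f (\<beta>2 i) - f (\<alpha>2 i)\<bar>"
        unfolding \<alpha>1_def \<beta>1_def \<alpha>2_def \<beta>2_def by (rule tri_split)
    qed
    also have "\<dots> = (\<Sum>i<n. \<bar>f (\<beta>1 i) - f (\<alpha>1 i)\<bar>) + (\<Sum>i<n. \<bar>f (\<beta>2 i) - f (\<alpha>2 i)\<bar>)"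
      by (rule sum.distrib)
    also have "\<dots> \<le> (\<Sum>i<n. \<bar>f (\<beta>1 i) - f (\<alpha>1 i)\<bar>) + e"
      using small by linarith
    finally show "\<exists>s'\<in>varset f a x. s \<le> s' + e"
      using F1 unfolding varset_def by (intro bexI[of _ "(\<Sum>i<n. \<bar>f (\<beta>1 i) - f (\<alpha>1 i)\<bar>)"]) (simp, blast)
  qed
qed

lemma varset_bdd:
  fixes f :: "real \<Rightarrow> real"
  assumes AC: "absolutely_continuous_on {a..b} f" and ab: "a \<le> b"
  shows "bdd_above (varset f a b)"
proof -
  obtain d where d: "d > 0" "\<And>x y s. a \<le> x \<Longrightarrow> x \<le> y \<Longrightarrow> y \<le> b \<Longrightarrow> y - x < d \<Longrightarrow> s \<in> varset f a y \<Longrightarrow>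
      \<exists>s'\<in>varset f a x. s \<le> s' + 1"
    using split_var[OF AC, of 1] by auto
  have ind: "\<forall>s\<in>varset f a (min b (a + real k * d / 2)). s \<le> real k" for k
  proof (induction k)
    case 0
    have "s = 0" if sa: "s \<in> varset f a a" for s
    proof -
      obtain n \<alpha> \<beta> where F: "fam a a n \<alpha> \<beta>" and sdef: "s = (\<Sum>i<n. \<bar>f (\<beta> i) - f (\<alpha> i)\<bar>)"
        using sa unfolding varset_def by blast
      have "\<beta> i = \<alpha> i" if "i < n" for i using F that unfolding fam_def by (meson order_antisym order_trans)
      then show ?thesis unfolding sdef by simp
    qed
    then have "\<forall>s\<in>varset f a a. s \<le> 0" by auto
    moreover have "min b (a + real 0 * d / 2) = a" using ab by simp
    ultimately show ?case by simp
  next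
    case (Suc k)
    show ?case
    proof
      fix s assume s: "s \<in> varset f a (min b (a + real (Suc k) * d / 2))"
      have "\<exists>s'\<in>varset f a (min b (a + real k * d / 2)). s \<le> s' + 1"
        by (rule d(2)[OF _ _ _ _ s]) (use ab d(1) in \<open>auto simp: field_simps min_def\<close>)
      then show "s \<le> real (Suc k)" using Suc.IH by force
    qed
  qed
  obtain k :: nat where k: "(b - a) / (d / 2) \<le> real k" using real_arch_simple by blast
  then have "min b (a + real k * d / 2) = b" using d(1) by (simp add: field_simps)
  then show ?thesis using ind[of k] by (auto simp: bdd_above_def)
qed

lemma varset_bdd': 
  fixes f :: "real \<Rightarrow> real"
  assumes AC: "absolutely_continuous_on {a..b} f" and "a \<le> x" "x \<le> b"
  shows "bdd_above (varset f a x)"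
proof -
  have ab: "a \<le> b" using assms by linarith
  show ?thesis by (rule bdd_above_mono[OF varset_bdd[OF AC ab] varset_mono[OF assms(3)]])
qed

lemma Var_step:
  fixes f :: "real \<Rightarrow> real"
  assumes AC: "absolutely_continuous_on {a..b} f" and xy: "a \<le> x" "x \<le> y" "y \<le> b"
  shows "Var f a x + \<bar>f y - f x\<bar> \<le> Var f a y"
proof -
  have bdd: "bdd_above (varset f a y)" using varset_bdd'[OF AC] xy by simp
  have "Var f a x \<le> Var f a y - \<bar>f y - f x\<bar>"
    unfolding Var_def
  proof (rule cSup_least)
    show "varset f a x \<noteq> {}" using varset_0 by blast
    fix s assume "s \<in> varset f a x"
    then obtain n \<alpha> \<beta> where F: "fam a x n \<alpha> \<beta>" and sdef: "s = (\<Sum>i<n. \<bar>f (\<beta> i) - f (\<alpha> i)\<bar>)"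
      unfolding varset_def by (auto simp only: mem_Collect_eq)
    define \<alpha>' where "\<alpha>' = \<alpha>(n := x)"
    define \<beta>' where "\<beta>' = \<beta>(n := y)"
    have bnd: "a \<le> \<alpha> i" "\<alpha> i \<le> \<beta> i" "\<beta> i \<le> x" if "i < n" for i
      using F that unfolding fam_def by auto
    have ov: "\<beta> i \<le> \<alpha> j \<or> \<beta> j \<le> \<alpha> i" if "i < n" "j < n" "i \<noteq> j" for i j
      using F that unfolding fam_def by blast
    have F'a: "\<forall>i<Suc n. a \<le> \<alpha>' i \<and> \<alpha>' i \<le> \<beta>' i \<and> \<beta>' i \<le> y"
    proof (intro allI impI)
      fix i assume i: "i < Suc n"
      show "a \<le> \<alpha>' i \<and> \<alpha>' i \<le> \<beta>' i \<and> \<beta>' i \<le> y"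
      proof (cases "i = n")
        case True then show ?thesis using xy by (simp add: \<alpha>'_def \<beta>'_def)
      next
        case False then have "i < n" using i by simp
        then show ?thesis using bnd[of i] xy False by (simp add: \<alpha>'_def \<beta>'_def)
      qed
    qed
    have F'b: "\<forall>i<Suc n. \<forall>j<Suc n. i \<noteq> j \<longrightarrow> \<beta>' i \<le> \<alpha>' j \<or> \<beta>' j \<le> \<alpha>' i"
    proof (intro allI impI)
      fix i j assume ij: "i < Suc n" "j < Suc n" "i \<noteq> j"
      show "\<beta>' i \<le> \<alpha>' j \<or> \<beta>' j \<le> \<alpha>' i"
      proof (cases "i = n")
        case True then have "j < n" using ij by simp
        then show ?thesis using True bnd[of j] ij by (simp add: \<alpha>'_def \<beta>'_def)
      next
        case False then have i: "i < n" using ij by simp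
        show ?thesis
        proof (cases "j = n")
          case True then show ?thesis using i bnd[of i] ij by (simp add: \<alpha>'_def \<beta>'_def)
        next
          case False then have "j < n" using ij by simp
          then show ?thesis using i ov[of i j] ij \<open>i \<noteq> n\<close> False by (simp add: \<alpha>'_def \<beta>'_def)
        qed
      qed
    qed
    have F': "fam a y (Suc n) \<alpha>' \<beta>'" unfolding fam_def using F'a F'b by blast
    have eq: "(\<Sum>i<n. \<bar>f (\<beta>' i) - f (\<alpha>' i)\<bar>) = (\<Sum>i<n. \<bar>f (\<beta> i) - f (\<alpha> i)\<bar>)"
      by (rule sum.cong) (auto simp: \<alpha>'_def \<beta>'_def)
    have "s + \<bar>f y - f x\<bar> = (\<Sum>i<Suc n. \<bar>f (\<beta>' i) - f (\<alpha>' i)\<bar>)"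
      unfolding sum.lessThan_Suc eq sdef by (simp add: \<alpha>'_def \<beta>'_def)
    also have "\<dots> \<in> varset f a y" unfolding varset_def using F' by blast
    finally have "s + \<bar>f y - f x\<bar> \<le> Sup (varset f a y)" by (rule cSup_upper[OF _ bdd])
    then show "s \<le> Sup (varset f a y) - \<bar>f y - f x\<bar>" by linarith
  qed
  then show ?thesis by linarith
qed

lemma Var_cont_step:
  fixes f :: "real \<Rightarrow> real"
  assumes AC: "absolutely_continuous_on {a..b} f" and e: "e > 0"
  shows "\<exists>d>0. \<forall>x y. a \<le> x \<longrightarrow> x \<le> y \<longrightarrow> y \<le> b \<longrightarrow> y - x < d \<longrightarrow> Var f a y \<le> Var f a x + e"
proof -
  obtain d where d: "d > 0" "\<And>x y s. a \<le> x \<Longrightarrow> x \<le> y \<Longrightarrow> y \<le> b \<Longrightarrow> y - x < d \<Longrightarrow> s \<in> varset f a y \<Longrightarrow>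
      \<exists>s'\<in>varset f a x. s \<le> s' + e"
    using split_var[OF AC e] by blast
  show ?thesis
  proof (intro exI[of _ d] conjI allI impI)
    fix x y assume xy: "a \<le> x" "x \<le> y" "y \<le> b" "y - x < d"
    have bdd: "bdd_above (varset f a x)" using varset_bdd'[OF AC] xy by simp
    show "Var f a y \<le> Var f a x + e"
      unfolding Var_def
    proof (rule cSup_least)
      show "varset f a y \<noteq> {}" using varset_0 by blast
      fix s assume "s \<in> varset f a y"
      then obtain s' where s': "s' \<in> varset f a x" "s \<le> s' + e" using d(2)[OF xy] by blast
      have "s' \<le> Sup (varset f a x)" by (rule cSup_upper[OF s'(1) bdd])
      then show "s \<le> Sup (varset f a x) + e" using s'(2) by linarith
    qed
  qed (use d in auto)
qed

lemma Var_cont: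
  fixes f :: "real \<Rightarrow> real"
  assumes AC: "absolutely_continuous_on {a..b} f"
  shows "continuous_on {a..b} (Var f a)"
  unfolding continuous_on_iff
proof (intro ballI allI impI)
  fix x0 e :: real assume x0: "x0 \<in> {a..b}" and e: "e > 0"
  obtain d where d: "d > 0" "\<And>x y. a \<le> x \<Longrightarrow> x \<le> y \<Longrightarrow> y \<le> b \<Longrightarrow> y - x < d \<Longrightarrow> Var f a y \<le> Var f a x + e/2"
    using Var_cont_step[OF AC, of "e/2"] e by auto
  show "\<exists>d>0. \<forall>x'\<in>{a..b}. dist x' x0 < d \<longrightarrow> dist (Var f a x') (Var f a x0) < e"
  proof (intro exI[of _ d] conjI ballI impI)
    fix x' assume x': "x' \<in> {a..b}" "dist x' x0 < d"
    show "dist (Var f a x') (Var f a x0) < e"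
    proof (cases "x0 \<le> x'")
      case True
      have "Var f a x0 \<le> Var f a x'" using Var_step[OF AC, of x0 x'] x0 x' True by auto
      moreover have "Var f a x' \<le> Var f a x0 + e/2" using d(2)[of x0 x'] x0 x' True by (auto simp: dist_real_def)
      ultimately show ?thesis using e by (simp add: dist_real_def)
    next
      case False
      have "Var f a x' \<le> Var f a x0" using Var_step[OF AC, of x' x0] x0 x' False by auto
      moreover have "Var f a x0 \<le> Var f a x' + e/2" using d(2)[of x' x0] x0 x' False by (auto simp: dist_real_def)
      ultimately show ?thesis using e by (simp add: dist_real_def)
    qed
  qed (use d in auto)
qed

lemma AC_cont:
  fixes f :: "real \<Rightarrow> real"
  assumes AC: "absolutely_continuous_on {a..b} f"
  shows "continuous_on {a..b} f"
  unfolding continuous_on_iff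
proof (intro ballI allI impI)
  fix x0 e :: real assume x0: "x0 \<in> {a..b}" and e: "e > 0"
  obtain d where d: "d > 0" "\<And>(n::nat) \<alpha> \<beta>. (\<forall>i<n. \<alpha> i \<le> \<beta> i \<and> {\<alpha> i..\<beta> i} \<subseteq> {a..b}) \<Longrightarrow>
        (\<forall>i<n. \<forall>j<n. i \<noteq> j \<longrightarrow> \<beta> i \<le> \<alpha> j \<or> \<beta> j \<le> \<alpha> i) \<Longrightarrow>
        (\<Sum>i<n. \<beta> i - \<alpha> i) < d \<Longrightarrow> (\<Sum>i<n. \<bar>f (\<beta> i) - f (\<alpha> i)\<bar>) < e"
    using AC_real_D[OF AC e] by blast
  show "\<exists>d>0. \<forall>x'\<in>{a..b}. dist x' x0 < d \<longrightarrow> dist (f x') (f x0) < e"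
  proof (intro exI[of _ d] conjI ballI impI)
    fix x' assume x': "x' \<in> {a..b}" "dist x' x0 < d"
    let ?\<alpha> = "\<lambda>i::nat. min x' x0" and ?\<beta> = "\<lambda>i::nat. max x' x0"
    have p1: "\<forall>i<(1::nat). ?\<alpha> i \<le> ?\<beta> i \<and> {?\<alpha> i..?\<beta> i} \<subseteq> {a..b}"
      using x0 x'(1) by auto
    have p2: "\<forall>i<(1::nat). \<forall>j<1. i \<noteq> j \<longrightarrow> ?\<beta> i \<le> ?\<alpha> j \<or> ?\<beta> j \<le> ?\<alpha> i" by simp
    have mm: "max x' x0 - min x' x0 = \<bar>x' - x0\<bar>" by linarith
    have p3: "(\<Sum>i<(1::nat). ?\<beta> i - ?\<alpha> i) < d" using x'(2) mm by (simp add: dist_real_def)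
    have "(\<Sum>i<(1::nat). \<bar>f (?\<beta> i) - f (?\<alpha> i)\<bar>) < e"
      by (rule d(2)[OF p1 p2 p3])
    then have lt: "\<bar>f (max x' x0) - f (min x' x0)\<bar> < e" by simp
    have "\<bar>f (max x' x0) - f (min x' x0)\<bar> = \<bar>f x' - f x0\<bar>"
    proof (cases "x0 \<le> x'")
      case True then show ?thesis by simp
    next
      case False then show ?thesis by (simp add: abs_minus_commute)
    qed
    then show "dist (f x') (f x0) < e" using lt by (simp add: dist_real_def)
  qed (use d in auto)
qed

lemma real_ac_diff:
  fixes f :: "real \<Rightarrow> real"
  assumes AC: "absolutely_continuous_on {a..b} f"
  shows "negligible {t \<in> {a..b}. \<not> (\<exists>D. (f has_real_derivative D) (at t within {a..b}))}"
proof (cases "a \<le> b")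
  case False
  then have "{t \<in> {a..b}. \<not> (\<exists>D. (f has_real_derivative D) (at t within {a..b}))} = {}" by auto
  then show ?thesis by (metis negligible_empty)
next
  case ab: True
  define c where "c t = max a (min b t)" for t
  define g where "g t = Var f a (c t) + f (c t)" for t
  define h where "h t = Var f a (c t) - f (c t)" for t
  have cab: "c t \<in> {a..b}" for t unfolding c_def using ab by auto
  have cid: "t \<in> {a..b} \<Longrightarrow> c t = t" for t unfolding c_def by auto
  have cmono: "x \<le> y \<Longrightarrow> c x \<le> c y" for x y unfolding c_def by auto
  have gm: "g x \<le> g y" if "x \<le> y" for x y
  proof -
    have "Var f a (c x) + \<bar>f (c y) - f (c x)\<bar> \<le> Var f a (c y)"
      using Var_step[OF AC, of "c x" "c y"] cab[of x] cab[of y] cmono[OF that] by auto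
    then show ?thesis unfolding g_def by linarith
  qed
  have hm: "h x \<le> h y" if "x \<le> y" for x y
  proof -
    have "Var f a (c x) + \<bar>f (c y) - f (c x)\<bar> \<le> Var f a (c y)"
      using Var_step[OF AC, of "c x" "c y"] cab[of x] cab[of y] cmono[OF that] by auto
    then show ?thesis unfolding h_def by linarith
  qed
  have contc: "continuous_on UNIV c" unfolding c_def by (intro continuous_intros)
  have cimg: "c ` UNIV \<subseteq> {a..b}" using cab by auto
  have contV: "continuous_on {a..b} (Var f a)" by (rule Var_cont[OF AC])
  have contf: "continuous_on {a..b} f" by (rule AC_cont[OF AC])
  have gc: "continuous_on UNIV g"
  proof -
    have "continuous_on {a..b} (\<lambda>x. Var f a x + f x)" using contV contf by (rule continuous_on_add)
    then show ?thesis unfolding g_def by (rule continuous_on_compose2[OF _ contc cimg])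
  qed
  have hc: "continuous_on UNIV h"
  proof -
    have "continuous_on {a..b} (\<lambda>x. Var f a x - f x)" using contV contf by (rule continuous_on_diff)
    then show ?thesis unfolding h_def by (rule continuous_on_compose2[OF _ contc cimg])
  qed
  have N: "negligible ({x. \<not> (\<exists>L. (g has_real_derivative L) (at x))} \<union> {x. \<not> (\<exists>L. (h has_real_derivative L) (at x))})"
    by (rule negligible_Un[OF mono_diff_ae[OF gm gc] mono_diff_ae[OF hm hc]])
  show ?thesis
  proof (rule negligible_subset[OF N], rule subsetI)
    fix t assume t: "t \<in> {t \<in> {a..b}. \<not> (\<exists>D. (f has_real_derivative D) (at t within {a..b}))}"
    show "t \<in> {x. \<not> (\<exists>L. (g has_real_derivative L) (at x))} \<union> {x. \<not> (\<exists>L. (h has_real_derivative L) (at x))}"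
    proof (rule ccontr)
      assume "t \<notin> {x. \<not> (\<exists>L. (g has_real_derivative L) (at x))} \<union> {x. \<not> (\<exists>L. (h has_real_derivative L) (at x))}"
      then obtain Dg Dh where Dg: "(g has_real_derivative Dg) (at t)" and Dh: "(h has_real_derivative Dh) (at t)"
        by blast
      have "((\<lambda>s. (g s - h s) / 2) has_real_derivative (Dg - Dh) / 2) (at t)"
        by (intro DERIV_cdivide DERIV_diff Dg Dh)
      then have d1: "((\<lambda>s. (g s - h s) / 2) has_real_derivative (Dg - Dh) / 2) (at t within {a..b})"
        by (rule has_field_derivative_at_within)
      have "(f has_real_derivative (Dg - Dh) / 2) (at t within {a..b})"
      proof (rule has_field_derivative_transform_within[OF d1 zero_less_one])
        show "t \<in> {a..b}" using t by simp
        fix s assume "s \<in> {a..b}"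
        then show "(g s - h s) / 2 = f s" unfolding g_def h_def using cid by simp
      qed
      then show False using t by blast
    qed
  qed
qed

lemma ac_component:
  fixes \<gamma> :: "real \<Rightarrow> 'a::euclidean_space"
  assumes AC: "absolutely_continuous_on S \<gamma>" and bv: "u \<in> Basis"
  shows "absolutely_continuous_on S (\<lambda>t. \<gamma> t \<bullet> u)"
  unfolding absolutely_continuous_on_def
proof (intro allI impI)
  fix e :: real assume e: "e > 0"
  obtain d where d: "d > 0" and H: "\<forall>(n::nat) a b. (\<forall>i<n. a i \<le> b i \<and> {a i..b i} \<subseteq> S) \<and>
        (\<forall>i<n. \<forall>j<n. i \<noteq> j \<longrightarrow> b i \<le> a j \<or> b j \<le> a i) \<and>
        (\<Sum>i<n. b i - a i) < d \<longrightarrow> (\<Sum>i<n. norm (\<gamma> (b i) - \<gamma> (a i))) < e"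
    using AC e unfolding absolutely_continuous_on_def by blast
  show "\<exists>d>0. \<forall>(n::nat) a b. (\<forall>i<n. a i \<le> b i \<and> {a i..b i} \<subseteq> S) \<and>
        (\<forall>i<n. \<forall>j<n. i \<noteq> j \<longrightarrow> b i \<le> a j \<or> b j \<le> a i) \<and>
        (\<Sum>i<n. b i - a i) < d \<longrightarrow> (\<Sum>i<n. norm (\<gamma> (b i) \<bullet> u - \<gamma> (a i) \<bullet> u)) < e"
  proof (intro exI[of _ d] conjI allI impI)
    fix n :: nat and a b :: "nat \<Rightarrow> real"
    assume P: "(\<forall>i<n. a i \<le> b i \<and> {a i..b i} \<subseteq> S) \<and>
        (\<forall>i<n. \<forall>j<n. i \<noteq> j \<longrightarrow> b i \<le> a j \<or> b j \<le> a i) \<and> (\<Sum>i<n. b i - a i) < d"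
    have "(\<Sum>k<n. norm (\<gamma> (b k) \<bullet> u - \<gamma> (a k) \<bullet> u)) \<le> (\<Sum>k<n. norm (\<gamma> (b k) - \<gamma> (a k)))"
    proof (rule sum_mono)
      fix k
      have "norm (\<gamma> (b k) \<bullet> u - \<gamma> (a k) \<bullet> u) = \<bar>(\<gamma> (b k) - \<gamma> (a k)) \<bullet> u\<bar>"
        by (simp add: inner_diff_left)
      also have "\<dots> \<le> norm (\<gamma> (b k) - \<gamma> (a k))" by (rule Basis_le_norm[OF bv])
      finally show "norm (\<gamma> (b k) \<bullet> u - \<gamma> (a k) \<bullet> u) \<le> norm (\<gamma> (b k) - \<gamma> (a k))" .
    qed
    also have "\<dots> < e" using H P by blast
    finally show "(\<Sum>k<n. norm (\<gamma> (b k) \<bullet> u - \<gamma> (a k) \<bullet> u)) < e" .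
  qed (use d in auto)
qed

lemma vec_ac_diff:
  fixes \<gamma> :: "real \<Rightarrow> 'a::euclidean_space"
  assumes AC: "absolutely_continuous_on {a..b} \<gamma>"
  shows "negligible {t \<in> {a..b}. \<not> (\<exists>v. (\<gamma> has_vector_derivative v) (at t within {a..b}))}"
proof -
  let ?N = "\<lambda>i. {t \<in> {a..b}. \<not> (\<exists>D. ((\<lambda>t. \<gamma> t \<bullet> i) has_real_derivative D) (at t within {a..b}))}"
  have N: "negligible (\<Union>i\<in>Basis. ?N i)"
  proof (rule negligible_Union)
    show "finite (?N ` Basis)" by simp
    fix T assume "T \<in> ?N ` Basis"
    then obtain i where i: "i \<in> Basis" "T = ?N i" by blast
    show "negligible T" unfolding i(2) by (rule real_ac_diff[OF ac_component[OF AC i(1)]])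
  qed
  show ?thesis
  proof (rule negligible_subset[OF N], rule subsetI)
    fix t assume t: "t \<in> {t \<in> {a..b}. \<not> (\<exists>v. (\<gamma> has_vector_derivative v) (at t within {a..b}))}"
    show "t \<in> (\<Union>i\<in>Basis. ?N i)"
    proof (rule ccontr)
      assume "t \<notin> (\<Union>i\<in>Basis. ?N i)"
      then have "\<forall>i\<in>Basis. \<exists>D. ((\<lambda>t. \<gamma> t \<bullet> i) has_real_derivative D) (at t within {a..b})"
        using t by blast
      then obtain D where D: "\<And>i. i \<in> Basis \<Longrightarrow> ((\<lambda>t. \<gamma> t \<bullet> i) has_real_derivative D i) (at t within {a..b})"
        by metis
      define v where "v = (\<Sum>i\<in>Basis. D i *\<^sub>R i)"
      have vi: "v \<bullet> i = D i" if "i \<in> Basis" for i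
        unfolding v_def using that by (simp add: inner_sum_left inner_Basis if_distrib cong: if_cong)
      have "(\<gamma> has_derivative (\<lambda>h. h *\<^sub>R v)) (at t within {a..b})"
      proof (rule has_derivative_componentwise_within[THEN iffD2], rule ballI)
        fix i :: 'a assume i: "i \<in> Basis"
        have "((\<lambda>t. \<gamma> t \<bullet> i) has_derivative (*) (D i)) (at t within {a..b})"
          using D[OF i] by (simp add: has_field_derivative_def)
        moreover have "(\<lambda>h. (h *\<^sub>R v) \<bullet> i) = (*) (D i)" using vi[OF i] by (auto simp: mult.commute)
        ultimately show "((\<lambda>x. \<gamma> x \<bullet> i) has_derivative (\<lambda>h. (h *\<^sub>R v) \<bullet> i)) (at t within {a..b})"
          by simp
      qed
      then have "(\<gamma> has_vector_derivative v) (at t within {a..b})"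
        by (simp add: has_vector_derivative_def)
      then show False using t by blast
    qed
  qed
qed

lemma d_eq_max:
  assumes "open \<Omega>"
  shows "dist_set \<Omega> x = max (oriented_dist \<Omega> x) 0"
proof (cases "x \<in> \<Omega>")
  case True
  then show ?thesis unfolding dist_set_def oriented_dist_def using infdist_nonneg[of x "- \<Omega>"] by simp
next
  case False
  then have "x \<in> - \<Omega>" by simp
  then show ?thesis unfolding dist_set_def oriented_dist_def using infdist_nonneg[of x \<Omega>] by simp
qed

lemma b_frontier:
  assumes "open \<Omega>" "\<Omega> \<noteq> {}" "x \<in> frontier \<Omega>"
  shows "oriented_dist \<Omega> x = 0"
proof -
  have "x \<in> closure \<Omega>" using assms(3) by (simp add: frontier_def)
  then have "infdist x \<Omega> = 0" using in_closure_iff_infdist_zero[OF assms(2)] by blast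
  moreover have "x \<notin> \<Omega>" using assms(1,3) by (simp add: frontier_def interior_open)
  then have "infdist x (- \<Omega>) = 0" by simp
  ultimately show ?thesis unfolding oriented_dist_def by simp
qed

lemma b_pos:
  assumes "\<Omega> \<noteq> {}" "x \<notin> closure \<Omega>"
  shows "oriented_dist \<Omega> x > 0"
proof -
  have "infdist x \<Omega> \<noteq> 0" using in_closure_iff_infdist_zero[OF assms(1)] assms(2) by blast
  then have "infdist x \<Omega> > 0" using infdist_nonneg[of x \<Omega>] by linarith
  moreover have "x \<in> - \<Omega>" using assms(2) closure_subset by blast
  then have "infdist x (- \<Omega>) = 0" by simp
  ultimately show ?thesis unfolding oriented_dist_def by simp
qed

lemma near_frontier:
  fixes x :: "'a::euclidean_space"
  assumes "\<Omega> \<noteq> {}" "x \<notin> \<Omega>" "infdist x \<Omega> < r"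
  shows "x \<in> (\<Union>z\<in>frontier \<Omega>. ball z r)"
proof -
  have "(INF a\<in>\<Omega>. dist x a) < r" using assms(3) infdist_notempty[OF assms(1)] by simp
  then obtain y where y: "y \<in> \<Omega>" "dist x y < r"
    using cINF_less_iff[of \<Omega> "\<lambda>a. dist x a" r] assms(1) by (auto intro: bdd_belowI[of _ 0])
  have "closed_segment x y \<inter> frontier \<Omega> \<noteq> {}"
  proof (rule connected_Int_frontier)
    show "connected (closed_segment x y)" by simp
    show "closed_segment x y \<inter> \<Omega> \<noteq> {}" using y(1) by auto
    show "closed_segment x y - \<Omega> \<noteq> {}" using assms(2) by auto
  qed
  then obtain z where z: "z \<in> closed_segment x y" "z \<in> frontier \<Omega>" by blast
  have "dist z x \<le> dist x y" using dist_in_closed_segment[OF z(1)] by simp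
  then have "x \<in> ball z r" using y(2) by simp
  then show ?thesis using z(2) by blast
qed

lemma chain_b:
  fixes \<gamma> :: "real \<Rightarrow> 'a::euclidean_space"
  assumes b: "(b has_derivative (\<lambda>h. Db \<bullet> h)) (at (\<gamma> t))"
    and g: "(\<gamma> has_vector_derivative v) (at t within S)"
  shows "((\<lambda>s. b (\<gamma> s)) has_real_derivative (Db \<bullet> v)) (at t within S)"
proof -
  have "(\<gamma> has_derivative (\<lambda>h. h *\<^sub>R v)) (at t within S)" using g by (simp add: has_vector_derivative_def)
  from has_derivative_compose[OF this b]
  have "((\<lambda>s. b (\<gamma> s)) has_derivative (\<lambda>h. Db \<bullet> (h *\<^sub>R v))) (at t within S)" .
  moreover have "(\<lambda>h. Db \<bullet> (h *\<^sub>R v)) = (*) (Db \<bullet> v)" by (auto simp: mult.commute)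
  ultimately show ?thesis by (simp add: has_field_derivative_def)
qed

lemma max_deriv_pos:
  fixes \<phi> :: "real \<Rightarrow> real"
  assumes d: "(\<phi> has_real_derivative c) (at t within S)" and pos: "\<phi> t > 0" and t: "t \<in> S"
  shows "((\<lambda>s. max (\<phi> s) 0) has_real_derivative c) (at t within S)"
proof -
  have "(\<phi> \<longlongrightarrow> \<phi> t) (at t within S)" using DERIV_continuous[OF d] by (simp add: continuous_within)
  then have "eventually (\<lambda>s. \<phi> s > 0) (at t within S)" using pos by (rule order_tendstoD(1))
  then obtain e where e: "e > 0" "\<And>s. s \<in> S \<Longrightarrow> s \<noteq> t \<Longrightarrow> dist s t < e \<Longrightarrow> \<phi> s > 0"
    unfolding eventually_at by blast
  show ?thesis
  proof (rule has_field_derivative_transform_within[OF d e(1) t])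
    fix s assume "s \<in> S" "dist s t < e"
    then have "\<phi> s > 0" using e(2) pos by (cases "s = t") auto
    then show "\<phi> s = max (\<phi> s) 0" by simp
  qed
qed

lemma max_deriv_zero:
  fixes \<phi> :: "real \<Rightarrow> real"
  assumes d: "(\<phi> has_real_derivative 0) (at t within S)" and z: "\<phi> t = 0"
  shows "((\<lambda>s. max (\<phi> s) 0) has_real_derivative 0) (at t within S)"
proof -
  have q: "((\<lambda>y. (\<phi> y - \<phi> t) / (y - t)) \<longlongrightarrow> 0) (at t within S)"
    using d by (simp add: has_field_derivative_iff)
  have "((\<lambda>y. (max (\<phi> y) 0 - max (\<phi> t) 0) / (y - t)) \<longlongrightarrow> 0) (at t within S)"
  proof (rule Lim_null_comparison)
    show "((\<lambda>y. \<bar>(\<phi> y - \<phi> t) / (y - t)\<bar>) \<longlongrightarrow> 0) (at t within S)" by (rule tendsto_rabs_zero[OF q])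
    show "eventually (\<lambda>y. norm ((max (\<phi> y) 0 - max (\<phi> t) 0) / (y - t)) \<le> \<bar>(\<phi> y - \<phi> t) / (y - t)\<bar>) (at t within S)"
    proof (rule always_eventually, rule allI)
      fix y
      have "\<bar>max (\<phi> y) 0\<bar> \<le> \<bar>\<phi> y\<bar>" by simp
      then have "\<bar>max (\<phi> y) 0\<bar> / \<bar>y - t\<bar> \<le> \<bar>\<phi> y\<bar> / \<bar>y - t\<bar>" by (rule divide_right_mono) simp
      then show "norm ((max (\<phi> y) 0 - max (\<phi> t) 0) / (y - t)) \<le> \<bar>(\<phi> y - \<phi> t) / (y - t)\<bar>"
        using z by (simp add: abs_divide)
    qed
  qed
  then show ?thesis by (simp add: has_field_derivative_iff)
qed

lemma discrete_countable:
  fixes A :: "real set"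
  assumes "discrete A"
  shows "countable A"
proof -
  have "\<forall>t\<in>A. \<exists>e>0. \<forall>y\<in>A. dist t y < e \<longrightarrow> y = t"
    using assms unfolding discrete_def by (simp add: isolated_in_dist_Ex_iff)
  then obtain e where e: "\<And>t. t \<in> A \<Longrightarrow> e t > 0" "\<And>t y. t \<in> A \<Longrightarrow> y \<in> A \<Longrightarrow> dist t y < e t \<Longrightarrow> y = t"
    by metis
  have "\<forall>t\<in>A. \<exists>rs. fst rs \<in> \<rat> \<and> snd rs \<in> \<rat> \<and> t - e t < fst rs \<and> fst rs < t \<and> t < snd rs \<and> snd rs < t + e t"
  proof
    fix t assume t: "t \<in> A"
    obtain r where r: "r \<in> \<rat>" "t - e t < r" "r < t" using Rats_dense_in_real[of "t - e t" t] e(1)[OF t] by auto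
    obtain s where s: "s \<in> \<rat>" "t < s" "s < t + e t" using Rats_dense_in_real[of t "t + e t"] e(1)[OF t] by auto
    show "\<exists>rs. fst rs \<in> \<rat> \<and> snd rs \<in> \<rat> \<and> t - e t < fst rs \<and> fst rs < t \<and> t < snd rs \<and> snd rs < t + e t"
      using r s by (intro exI[of _ "(r, s)"]) simp
  qed
  then obtain g where g: "\<And>t. t \<in> A \<Longrightarrow> fst (g t) \<in> \<rat> \<and> snd (g t) \<in> \<rat> \<and> t - e t < fst (g t) \<and> fst (g t) < t \<and> t < snd (g t) \<and> snd (g t) < t + e t"
    by metis
  have inj: "inj_on g A"
  proof (rule inj_onI)
    fix t1 t2 assume t: "t1 \<in> A" "t2 \<in> A" "g t1 = g t2"
    have "fst (g t1) < t2" "t2 < snd (g t1)" using g[OF t(2)] t(3) by auto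
    then have "dist t1 t2 < e t1" using g[OF t(1)] by (auto simp: dist_real_def)
    then show "t1 = t2" using e(2)[OF t(1) t(2)] by simp
  qed
  have "g ` A \<subseteq> \<rat> \<times> \<rat>"
  proof
    fix p assume "p \<in> g ` A"
    then obtain t where "t \<in> A" "p = g t" by blast
    then show "p \<in> \<rat> \<times> \<rat>" using g[of t] by (simp add: mem_Times_iff)
  qed
  then have "countable (g ` A)" by (rule countable_subset) (auto simp: countable_rat)
  then show ?thesis using inj by (rule countable_image_inj_on)
qed

theorem lemma3p1:
  fixes \<Omega> :: "'a::euclidean_space set"
    and \<rho>0 T :: real
    and \<gamma> :: "real \<Rightarrow> 'a"
    and Db :: "'a \<Rightarrow> 'a"
    and D2b :: "'a \<Rightarrow> 'a \<Rightarrow>\<^sub>L 'a"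
  assumes "open \<Omega>" and "bounded \<Omega>" and "\<Omega> \<noteq> {}"
    and "C2_boundary \<Omega>"
    and "\<rho>0 > 0"
    and "C2_on_with (\<Union>x\<in>frontier \<Omega>. ball x \<rho>0) (oriented_dist \<Omega>) Db D2b"
    and "bounded (Db ` (\<Union>x\<in>frontier \<Omega>. ball x \<rho>0))"
    and "bounded (D2b ` (\<Union>x\<in>frontier \<Omega>. ball x \<rho>0))"
    and "absolutely_continuous_on {0..T} \<gamma>"
    and "\<forall>t\<in>{0..T}. dist_set \<Omega> (\<gamma> t) < \<rho>0"
  shows "absolutely_continuous_on {0..T} (\<lambda>t. dist_set \<Omega> (\<gamma> t))
    \<and> (AE t in lebesgue. t \<in> {0..T} \<longrightarrow>
         (\<exists>v. (\<gamma> has_vector_derivative v) (at t within {0..T}) \<and>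
              ((\<lambda>s. dist_set \<Omega> (\<gamma> s)) has_real_derivative
                 ((Db (\<gamma> t) \<bullet> v) * indicator (- \<Omega>) (\<gamma> t))) (at t within {0..T})))
    \<and> discrete {t \<in> {0..T}. \<gamma> t \<in> frontier \<Omega> \<and> \<gamma> differentiable (at t within {0..T}) \<and>
                 Db (\<gamma> t) \<bullet> vector_derivative \<gamma> (at t within {0..T}) \<noteq> 0}"
proof -
  let ?U = "\<Union>x\<in>frontier \<Omega>. ball x \<rho>0"
  let ?S = "{0..T}"
  let ?b = "oriented_dist \<Omega>"
  have bder: "\<And>z. z \<in> ?U \<Longrightarrow> (?b has_derivative (\<lambda>h. Db z \<bullet> h)) (at z)"
    using assms(6) unfolding C2_on_with_def by blast
  have dmax: "\<And>x. dist_set \<Omega> x = max (?b x) 0" using d_eq_max[OF assms(1)] .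
  have AC: "absolutely_continuous_on ?S (\<lambda>t. dist_set \<Omega> (\<gamma> t))"
    unfolding absolutely_continuous_on_def
  proof (intro allI impI)
    fix e :: real assume e: "e > 0"
    obtain d where d: "d > 0" and H: "\<forall>(n::nat) a b. (\<forall>i<n. a i \<le> b i \<and> {a i..b i} \<subseteq> ?S) \<and>
        (\<forall>i<n. \<forall>j<n. i \<noteq> j \<longrightarrow> b i \<le> a j \<or> b j \<le> a i) \<and>
        (\<Sum>i<n. b i - a i) < d \<longrightarrow> (\<Sum>i<n. norm (\<gamma> (b i) - \<gamma> (a i))) < e"
      using assms(9) e unfolding absolutely_continuous_on_def by blast
    show "\<exists>d>0. \<forall>(n::nat) a b. (\<forall>i<n. a i \<le> b i \<and> {a i..b i} \<subseteq> ?S) \<and>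
        (\<forall>i<n. \<forall>j<n. i \<noteq> j \<longrightarrow> b i \<le> a j \<or> b j \<le> a i) \<and>
        (\<Sum>i<n. b i - a i) < d \<longrightarrow> (\<Sum>i<n. norm (dist_set \<Omega> (\<gamma> (b i)) - dist_set \<Omega> (\<gamma> (a i)))) < e"
    proof (intro exI[of _ d] conjI allI impI)
      fix n :: nat and a b :: "nat \<Rightarrow> real"
      assume P: "(\<forall>i<n. a i \<le> b i \<and> {a i..b i} \<subseteq> ?S) \<and>
        (\<forall>i<n. \<forall>j<n. i \<noteq> j \<longrightarrow> b i \<le> a j \<or> b j \<le> a i) \<and> (\<Sum>i<n. b i - a i) < d"
      have "(\<Sum>k<n. norm (dist_set \<Omega> (\<gamma> (b k)) - dist_set \<Omega> (\<gamma> (a k)))) \<le> (\<Sum>k<n. norm (\<gamma> (b k) - \<gamma> (a k)))"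
      proof (rule sum_mono)
        fix k
        show "norm (dist_set \<Omega> (\<gamma> (b k)) - dist_set \<Omega> (\<gamma> (a k))) \<le> norm (\<gamma> (b k) - \<gamma> (a k))"
          using infdist_triangle_abs[of "\<gamma> (b k)" \<Omega> "\<gamma> (a k)"] by (simp add: dist_set_def dist_norm)
      qed
      also have "\<dots> < e" using H P by blast
      finally show "(\<Sum>k<n. norm (dist_set \<Omega> (\<gamma> (b k)) - dist_set \<Omega> (\<gamma> (a k)))) < e" .
    qed (use d in auto)
  qed
  define Ns where "Ns = {t \<in> ?S. \<gamma> t \<in> frontier \<Omega> \<and> \<gamma> differentiable (at t within ?S) \<and>
                 Db (\<gamma> t) \<bullet> vector_derivative \<gamma> (at t within ?S) \<noteq> 0}"
  have disc: "discrete Ns"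
  proof (rule discreteI)
    fix t assume t: "t \<in> Ns"
    then have tS: "t \<in> ?S" and fr: "\<gamma> t \<in> frontier \<Omega>" and dif: "\<gamma> differentiable (at t within ?S)"
      and nz: "Db (\<gamma> t) \<bullet> vector_derivative \<gamma> (at t within ?S) \<noteq> 0" unfolding Ns_def by auto
    let ?v = "vector_derivative \<gamma> (at t within ?S)"
    have gv: "(\<gamma> has_vector_derivative ?v) (at t within ?S)" using dif vector_derivative_works by blast
    have "\<gamma> t \<in> ball (\<gamma> t) \<rho>0" using assms(5) by simp
    then have inU: "\<gamma> t \<in> ?U" using fr by blast
    have phid: "((\<lambda>s. ?b (\<gamma> s)) has_real_derivative (Db (\<gamma> t) \<bullet> ?v)) (at t within ?S)"
      by (rule chain_b[OF bder[OF inU] gv])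
    have phi0: "?b (\<gamma> t) = 0" by (rule b_frontier[OF assms(1) assms(3) fr])
    have "((\<lambda>y. (?b (\<gamma> y) - ?b (\<gamma> t)) / (y - t)) \<longlongrightarrow> Db (\<gamma> t) \<bullet> ?v) (at t within ?S)"
      using phid by (simp add: has_field_derivative_iff)
    then have "eventually (\<lambda>y. (?b (\<gamma> y) - ?b (\<gamma> t)) / (y - t) \<noteq> 0) (at t within ?S)"
      using nz by (rule tendsto_imp_eventually_ne)
    then obtain e where e: "e > 0" "\<And>y. y \<in> ?S \<Longrightarrow> y \<noteq> t \<Longrightarrow> dist y t < e \<Longrightarrow> (?b (\<gamma> y) - ?b (\<gamma> t)) / (y - t) \<noteq> 0"
      unfolding eventually_at by blast
    have "\<forall>y\<in>Ns. dist t y < e \<longrightarrow> y = t"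
    proof (intro ballI impI)
      fix y assume y: "y \<in> Ns" "dist t y < e"
      show "y = t"
      proof (rule ccontr)
        assume yt: "y \<noteq> t"
        have yS: "y \<in> ?S" and yfr: "\<gamma> y \<in> frontier \<Omega>" using y(1) unfolding Ns_def by auto
        have "?b (\<gamma> y) = 0" by (rule b_frontier[OF assms(1) assms(3) yfr])
        then have "(?b (\<gamma> y) - ?b (\<gamma> t)) / (y - t) = 0" using phi0 by simp
        moreover have "dist y t < e" using y(2) by (simp add: dist_commute)
        ultimately show False using e(2)[OF yS yt] by blast
      qed
    qed
    then show "t isolated_in Ns" unfolding isolated_in_dist_Ex_iff using t e(1) by blast
  qed
  have cN: "countable Ns" by (rule discrete_countable[OF disc])
  define N1 where "N1 = {t \<in> ?S. \<not> (\<exists>v. (\<gamma> has_vector_derivative v) (at t within ?S))}"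
  have nN1: "negligible N1" unfolding N1_def by (rule vec_ac_diff[OF assms(9)])
  have nN: "negligible (N1 \<union> Ns \<union> {0})"
    by (intro negligible_Un nN1 negl_countable[OF cN] negligible_sing)
  have AE: "AE t in lebesgue. t \<in> ?S \<longrightarrow>
         (\<exists>v. (\<gamma> has_vector_derivative v) (at t within ?S) \<and>
              ((\<lambda>s. dist_set \<Omega> (\<gamma> s)) has_real_derivative
                 ((Db (\<gamma> t) \<bullet> v) * indicator (- \<Omega>) (\<gamma> t))) (at t within ?S))"
  proof (rule AE_I')
    show "N1 \<union> Ns \<union> {0} \<in> null_sets lebesgue" using nN negligible_iff_null_sets by blast
    show "{t \<in> space lebesgue. \<not> (t \<in> ?S \<longrightarrow>
         (\<exists>v. (\<gamma> has_vector_derivative v) (at t within ?S) \<and>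
              ((\<lambda>s. dist_set \<Omega> (\<gamma> s)) has_real_derivative
                 ((Db (\<gamma> t) \<bullet> v) * indicator (- \<Omega>) (\<gamma> t))) (at t within ?S)))} \<subseteq> N1 \<union> Ns \<union> {0}"
    proof (rule subsetI)
      fix t assume tt: "t \<in> {t \<in> space lebesgue. \<not> (t \<in> ?S \<longrightarrow>
         (\<exists>v. (\<gamma> has_vector_derivative v) (at t within ?S) \<and>
              ((\<lambda>s. dist_set \<Omega> (\<gamma> s)) has_real_derivative
                 ((Db (\<gamma> t) \<bullet> v) * indicator (- \<Omega>) (\<gamma> t))) (at t within ?S)))}"
      then have tS: "t \<in> ?S" and nt: "\<not> (\<exists>v. (\<gamma> has_vector_derivative v) (at t within ?S) \<and>
              ((\<lambda>s. dist_set \<Omega> (\<gamma> s)) has_real_derivative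
                 ((Db (\<gamma> t) \<bullet> v) * indicator (- \<Omega>) (\<gamma> t))) (at t within ?S))"
        by auto
      show "t \<in> N1 \<union> Ns \<union> {0}"
      proof (rule ccontr)
        assume "t \<notin> N1 \<union> Ns \<union> {0}"
        then have tN1: "t \<notin> N1" and tNs: "t \<notin> Ns" and t0: "t \<noteq> 0" by auto
        obtain v where gv: "(\<gamma> has_vector_derivative v) (at t within ?S)" using tN1 tS unfolding N1_def by auto
        have T0: "0 < T" using tS t0 by auto
        have "((\<lambda>s. dist_set \<Omega> (\<gamma> s)) has_real_derivative (Db (\<gamma> t) \<bullet> v) * indicator (- \<Omega>) (\<gamma> t)) (at t within ?S)"
        proof (cases "\<gamma> t \<in> \<Omega>")
          case True
          have ind: "indicator (- \<Omega>) (\<gamma> t) = (0::real)" using True by simp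
          have "(\<gamma> \<longlongrightarrow> \<gamma> t) (at t within ?S)"
            using has_vector_derivative_continuous[OF gv] by (simp add: continuous_within)
          then have "eventually (\<lambda>s. \<gamma> s \<in> \<Omega>) (at t within ?S)" using assms(1) True by (rule topological_tendstoD)
          then obtain e where e: "e > 0" "\<And>s. s \<in> ?S \<Longrightarrow> s \<noteq> t \<Longrightarrow> dist s t < e \<Longrightarrow> \<gamma> s \<in> \<Omega>"
            unfolding eventually_at by blast
          have c0: "((\<lambda>s. 0) has_real_derivative 0) (at t within ?S)" by (rule DERIV_const)
          have "((\<lambda>s. dist_set \<Omega> (\<gamma> s)) has_real_derivative 0) (at t within ?S)"
          proof (rule has_field_derivative_transform_within[OF c0 e(1) tS])
            fix s assume s: "s \<in> ?S" "dist s t < e"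
            then have "\<gamma> s \<in> \<Omega>" using e(2) True by (cases "s = t") auto
            then show "0 = dist_set \<Omega> (\<gamma> s)" by (simp add: dist_set_def)
          qed
          then show ?thesis using ind by simp
        next
          case False
          have ind: "indicator (- \<Omega>) (\<gamma> t) = (1::real)" using False by simp
          have "infdist (\<gamma> t) \<Omega> < \<rho>0" using assms(10) tS by (simp add: dist_set_def)
          then have inU: "\<gamma> t \<in> ?U" by (rule near_frontier[OF assms(3) False])
          have phid: "((\<lambda>s. ?b (\<gamma> s)) has_real_derivative (Db (\<gamma> t) \<bullet> v)) (at t within ?S)"
            by (rule chain_b[OF bder[OF inU] gv])
          have eqf: "(\<lambda>s. dist_set \<Omega> (\<gamma> s)) = (\<lambda>s. max (?b (\<gamma> s)) 0)" using dmax by simp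
          show ?thesis
          proof (cases "\<gamma> t \<in> frontier \<Omega>")
            case True
            have dif: "\<gamma> differentiable (at t within ?S)" using gv vector_derivative_works
              by (auto simp: differentiable_def has_vector_derivative_def)
            have "vector_derivative \<gamma> (at t within cbox 0 T) = v"
              by (rule vector_derivative_within_cbox) (use T0 tS gv in auto)
            then have vd: "vector_derivative \<gamma> (at t within ?S) = v" by simp
            have z: "Db (\<gamma> t) \<bullet> v = 0" using tNs tS True dif vd unfolding Ns_def by auto
            have "((\<lambda>s. max (?b (\<gamma> s)) 0) has_real_derivative 0) (at t within ?S)"
              by (rule max_deriv_zero) (use phid z b_frontier[OF assms(1) assms(3) True] in auto)
            then show ?thesis using eqf ind z by simp
          next
            case notfr: False
            have "\<gamma> t \<notin> closure \<Omega>" using False notfr closure_Un_frontier by blast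
            then have "?b (\<gamma> t) > 0" by (rule b_pos[OF assms(3)])
            then have "((\<lambda>s. max (?b (\<gamma> s)) 0) has_real_derivative (Db (\<gamma> t) \<bullet> v)) (at t within ?S)"
              by (rule max_deriv_pos[OF phid _ tS])
            then show ?thesis using eqf ind by simp
          qed
        qed
        then show False using nt gv by blast
      qed
    qed
  qed
  show ?thesis using AC AE disc unfolding Ns_def by blast
qed


end
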